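(* Let $G$ be a finite group with identity $e$, let $R[G]$ be its group algebra over $\mathbb{R}$, and let $$S=\{x=\textstyle\sum_{g\in G}x_g g\in R[G]:\ \sum_{g\in G}x_g=1,\ x_g\ge 0\ \text{for all } g\in G\}.$$ Let $p(t)=\sum_{k=0}^{\infty}a_kt^k$ be a power series with $0\le a_k<1$ for all $k\ge 0$ and $\sum_{k=0}^\infty a_k=1$, and consider the map $p:S\to S$, $p(x)=a_0e+\sum_{k\ge1}a_kx^k$. Then $p$ is ergodic on $S$: for every $x\in S$ the limit $$\lim_{n\to\infty}\frac1n\sum_{i=1}^n p^{[i]}(x)$$ exists, where $p^{[1]}(x)=p(x)$ and $p^{[i+1]}(x)=p(p^{[i]}(x))$.
   Context: $R[G]$ is considered with the Euclidean topology of the finite-dimensional real vector space with basis $G$. For $x\in S$ the series $a_0e+\sum_{k\ge1}a_kx^k$ converges and its value lies in $S$. *)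

theory Defs
  imports "HOL-Analysis.Analysis" "HOL-Algebra.Group"
begin

text \<open>Elements of the real group algebra R[G] of a finite group G are represented as
functions 'a => real vanishing outside carrier G (coefficients x_g). The function
space carries the product topology, which on these finitely supported functions is the
Euclidean topology.\<close>

definition gconv :: "('a, 'b) monoid_scheme \<Rightarrow> ('a \<Rightarrow> real) \<Rightarrow> ('a \<Rightarrow> real) \<Rightarrow> ('a \<Rightarrow> real)" where
  "gconv G x y = (\<lambda>g. if g \<in> carrier G
      then (\<Sum>h\<in>carrier G. x h * y (inv\<^bsub>G\<^esub> h \<otimes>\<^bsub>G\<^esub> g)) else 0)"

definition gunit :: "('a, 'b) monoid_scheme \<Rightarrow> ('a \<Rightarrow> real)" where
  "gunit G = (\<lambda>g. if g = \<one>\<^bsub>G\<^esub> then 1 else 0)"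

primrec gpow :: "('a, 'b) monoid_scheme \<Rightarrow> ('a \<Rightarrow> real) \<Rightarrow> nat \<Rightarrow> ('a \<Rightarrow> real)" where
  "gpow G x 0 = gunit G"
| "gpow G x (Suc n) = gconv G x (gpow G x n)"

definition gsimplex :: "('a, 'b) monoid_scheme \<Rightarrow> ('a \<Rightarrow> real) set" where
  "gsimplex G = {x. (\<forall>g. g \<notin> carrier G \<longrightarrow> x g = 0) \<and> (\<forall>g\<in>carrier G. 0 \<le> x g)
                  \<and> (\<Sum>g\<in>carrier G. x g) = 1}"

definition pmap :: "('a, 'b) monoid_scheme \<Rightarrow> (nat \<Rightarrow> real) \<Rightarrow> ('a \<Rightarrow> real) \<Rightarrow> ('a \<Rightarrow> real)" where
  "pmap G a x = (\<lambda>g. \<Sum>k. a k * gpow G x k g)"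

end

theory Submission
  imports Defs "HOL-Algebra.Multiplicative_Group"
begin

locale fg = group + assumes fin: "finite (carrier G)"
begin

abbreviation "C \<equiv> carrier G"

definition onC :: "('a \<Rightarrow> real) \<Rightarrow> bool" where
  "onC y \<longleftrightarrow> (\<forall>g. g \<notin> C \<longrightarrow> y g = 0)"

lemma gconv_out: "g \<notin> C \<Longrightarrow> gconv G x y g = 0"
  by (simp add: gconv_def)

lemma gconv_in: "g \<in> C \<Longrightarrow> gconv G x y g = (\<Sum>h\<in>C. x h * y (inv h \<otimes> g))"
  by (simp add: gconv_def)

lemma onC_gconv: "onC (gconv G x y)"
  by (simp add: onC_def gconv_out)

lemma onC_gunit: "onC (gunit G)"
  by (auto simp: onC_def gunit_def)

lemma onC_gpow: "onC (gpow G x n)"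
  by (cases n) (auto simp: onC_gunit onC_gconv)

lemma reindex_left:
  assumes "k \<in> C"
  shows "(\<Sum>l\<in>C. f (k \<otimes> l)) = (\<Sum>h\<in>C. f h)"
proof -
  have "bij_betw (\<lambda>l. k \<otimes> l) C C"
    using assms by (intro bij_betwI[where g="\<lambda>h. inv k \<otimes> h"])
       (auto simp: m_assoc[symmetric])
  then show ?thesis by (rule sum.reindex_bij_betw)
qed

lemma reindex_invl:
  assumes "g \<in> C"
  shows "(\<Sum>h\<in>C. f (inv h \<otimes> g)) = (\<Sum>h\<in>C. f h)"
proof -
  have "bij_betw (\<lambda>h. inv h \<otimes> g) C C"
    using assms by (intro bij_betwI[where g="\<lambda>k. g \<otimes> inv k"])
       (auto simp: m_assoc inv_mult_group, simp add: m_assoc[symmetric])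
  then show ?thesis by (rule sum.reindex_bij_betw)
qed

lemma gconv_assoc: "gconv G (gconv G x y) z = gconv G x (gconv G y z)"
proof
  fix g
  show "gconv G (gconv G x y) z g = gconv G x (gconv G y z) g"
  proof (cases "g \<in> C")
    case False then show ?thesis by (simp add: gconv_out)
  next
    case True
    have "gconv G (gconv G x y) z g = (\<Sum>h\<in>C. (\<Sum>k\<in>C. x k * y (inv k \<otimes> h)) * z (inv h \<otimes> g))"
      using True by (simp add: gconv_in)
    also have "\<dots> = (\<Sum>k\<in>C. \<Sum>h\<in>C. x k * (y (inv k \<otimes> h) * z (inv h \<otimes> g)))"
      by (subst sum.swap) (simp add: sum_distrib_right sum_distrib_left mult.assoc)
    also have "\<dots> = (\<Sum>k\<in>C. \<Sum>l\<in>C. x k * (y l * z (inv l \<otimes> (inv k \<otimes> g))))"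
    proof (rule sum.cong[OF refl])
      fix k assume k: "k \<in> C"
      have "(\<Sum>l\<in>C. x k * (y (inv k \<otimes> (k \<otimes> l)) * z (inv (k \<otimes> l) \<otimes> g)))
          = (\<Sum>h\<in>C. x k * (y (inv k \<otimes> h) * z (inv h \<otimes> g)))"
        using k by (rule reindex_left)
      moreover have "(\<Sum>l\<in>C. x k * (y (inv k \<otimes> (k \<otimes> l)) * z (inv (k \<otimes> l) \<otimes> g)))
          = (\<Sum>l\<in>C. x k * (y l * z (inv l \<otimes> (inv k \<otimes> g))))"
        using k True by (intro sum.cong refl) (simp add: m_assoc[symmetric] inv_mult_group)
      ultimately show "(\<Sum>h\<in>C. x k * (y (inv k \<otimes> h) * z (inv h \<otimes> g)))
          = (\<Sum>l\<in>C. x k * (y l * z (inv l \<otimes> (inv k \<otimes> g))))" by simp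
    qed
    also have "\<dots> = gconv G x (gconv G y z) g"
      using True by (simp add: gconv_in sum_distrib_left)
    finally show ?thesis .
  qed
qed

lemma gconv_unit_left: "onC y \<Longrightarrow> gconv G (gunit G) y = y"
proof
  fix g assume y: "onC y"
  show "gconv G (gunit G) y g = y g"
  proof (cases "g \<in> C")
    case False then show ?thesis using y by (simp add: gconv_out onC_def)
  next
    case True
    have "gconv G (gunit G) y g = (\<Sum>h\<in>C. (if h = \<one> then y g else 0))"
      using True by (intro trans[OF gconv_in[OF True]] sum.cong) (auto simp: gunit_def)
    also have "\<dots> = y g" using True by (simp add: sum.delta fin)
    finally show ?thesis .
  qed
qed

lemma gconv_unit_right: "onC y \<Longrightarrow> gconv G y (gunit G) = y"
proof
  fix g assume y: "onC y"
  show "gconv G y (gunit G) g = y g"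
  proof (cases "g \<in> C")
    case False then show ?thesis using y by (simp add: gconv_out onC_def)
  next
    case True
    have eq: "h \<in> C \<Longrightarrow> (inv h \<otimes> g = \<one>) = (h = g)" for h
      using True by (metis inv_closed inv_comm inv_inv l_inv r_inv_ex m_closed inv_equality)
    have "gconv G y (gunit G) g = (\<Sum>h\<in>C. (if h = g then y h else 0))"
      using True by (intro trans[OF gconv_in[OF True]] sum.cong) (auto simp: gunit_def eq)
    also have "\<dots> = y g" using True by (simp add: sum.delta fin)
    finally show ?thesis .
  qed
qed

lemma gpow_add: "gpow G x (m + n) = gconv G (gpow G x m) (gpow G x n)"
  by (induction m) (simp_all add: gconv_unit_left onC_gpow gconv_assoc)

lemma gpow_mult: "gpow G x (m * n) = gpow G (gpow G x m) n"
  by (induction n) (simp_all add: gpow_add)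

lemma gpow_1: "onC x \<Longrightarrow> gpow G x 1 = x"
  by (simp add: gconv_unit_right)


lemma gconv_nonneg:
  assumes "\<And>g. g \<in> C \<Longrightarrow> 0 \<le> y g" "\<And>g. g \<in> C \<Longrightarrow> 0 \<le> z g"
  shows "0 \<le> gconv G y z g"
  using assms by (cases "g \<in> C") (auto simp: gconv_in gconv_out intro!: sum_nonneg mult_nonneg_nonneg)

lemma gconv_mass: "(\<Sum>g\<in>C. gconv G y z g) = (\<Sum>g\<in>C. y g) * (\<Sum>g\<in>C. z g)"
proof -
  have "(\<Sum>g\<in>C. gconv G y z g) = (\<Sum>g\<in>C. \<Sum>h\<in>C. y h * z (inv h \<otimes> g))"
    by (simp add: gconv_in)
  also have "\<dots> = (\<Sum>h\<in>C. y h * (\<Sum>g\<in>C. z (inv h \<otimes> g)))"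
    by (subst sum.swap) (simp add: sum_distrib_left)
  also have "\<dots> = (\<Sum>h\<in>C. y h * (\<Sum>g\<in>C. z g))"
    by (intro sum.cong refl) (simp add: reindex_left)
  finally show ?thesis by (simp add: sum_distrib_right)
qed

lemma gsimplex_iff: "y \<in> gsimplex G \<longleftrightarrow> onC y \<and> (\<forall>g\<in>C. 0 \<le> y g) \<and> (\<Sum>g\<in>C. y g) = 1"
  by (auto simp: gsimplex_def onC_def)

lemma gunit_gsimplex: "gunit G \<in> gsimplex G"
  unfolding gsimplex_iff using onC_gunit by (simp add: gunit_def sum.delta' fin)

lemma gconv_gsimplex: "y \<in> gsimplex G \<Longrightarrow> z \<in> gsimplex G \<Longrightarrow> gconv G y z \<in> gsimplex G"
  by (auto simp: gsimplex_iff onC_gconv gconv_mass intro!: gconv_nonneg)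

lemma gpow_gsimplex: "y \<in> gsimplex G \<Longrightarrow> gpow G y n \<in> gsimplex G"
  by (induction n) (auto simp: gunit_gsimplex gconv_gsimplex)

lemma gsimplex_bounds: assumes "y \<in> gsimplex G" shows "0 \<le> y g" "y g \<le> 1"
proof -
  show "0 \<le> y g" using assms by (cases "g \<in> C") (auto simp: gsimplex_iff onC_def)
  show "y g \<le> 1"
  proof (cases "g \<in> C")
    case True
    have "y g \<le> (\<Sum>g\<in>C. y g)"
      using assms True by (intro member_le_sum fin) (auto simp: gsimplex_iff)
    then show ?thesis using assms by (simp add: gsimplex_iff)
  qed (use assms in \<open>auto simp: gsimplex_iff onC_def\<close>)
qed

definition n1 :: "('a \<Rightarrow> real) \<Rightarrow> real" where "n1 y = (\<Sum>g\<in>C. \<bar>y g\<bar>)"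

lemma n1_nonneg: "0 \<le> n1 y" by (simp add: n1_def sum_nonneg)

lemma abs_le_n1: "onC y \<Longrightarrow> \<bar>y g\<bar> \<le> n1 y"
  unfolding n1_def by (cases "g \<in> C") (auto simp: onC_def fin intro!: member_le_sum sum_nonneg)

lemma n1_gconv: "n1 (gconv G y z) \<le> n1 y * n1 z"
proof -
  have "n1 (gconv G y z) \<le> (\<Sum>g\<in>C. \<Sum>h\<in>C. \<bar>y h\<bar> * \<bar>z (inv h \<otimes> g)\<bar>)"
    unfolding n1_def
  proof (intro sum_mono)
    fix g assume g: "g \<in> C"
    have "\<bar>gconv G y z g\<bar> = \<bar>\<Sum>h\<in>C. y h * z (inv h \<otimes> g)\<bar>" using g by (simp add: gconv_in)
    also have "\<dots> \<le> (\<Sum>h\<in>C. \<bar>y h * z (inv h \<otimes> g)\<bar>)" by (rule sum_abs)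
    finally show "\<bar>gconv G y z g\<bar> \<le> (\<Sum>h\<in>C. \<bar>y h\<bar> * \<bar>z (inv h \<otimes> g)\<bar>)" by (simp add: abs_mult)
  qed
  also have "\<dots> = (\<Sum>h\<in>C. \<bar>y h\<bar> * (\<Sum>g\<in>C. \<bar>z (inv h \<otimes> g)\<bar>))"
    by (subst sum.swap) (simp add: sum_distrib_left)
  also have "\<dots> = (\<Sum>h\<in>C. \<bar>y h\<bar> * n1 z)"
    unfolding n1_def by (intro sum.cong refl) (simp add: reindex_left[where f="\<lambda>g. \<bar>z g\<bar>"])
  finally show ?thesis by (simp add: sum_distrib_right n1_def)
qed

lemma n1_gsimplex: "y \<in> gsimplex G \<Longrightarrow> n1 y = 1"
  by (simp add: n1_def gsimplex_iff)

lemma gconv_diff_left: "gconv G (\<lambda>g. y g - z g) w = (\<lambda>g. gconv G y w g - gconv G z w g)"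
  by (rule ext) (simp add: gconv_def left_diff_distrib sum_subtractf)

lemma gconv_diff_right: "gconv G w (\<lambda>g. y g - z g) = (\<lambda>g. gconv G w y g - gconv G w z g)"
  by (rule ext) (simp add: gconv_def right_diff_distrib sum_subtractf)

lemma gconv_scale_left: "gconv G (\<lambda>g. c * y g) w = (\<lambda>g. c * gconv G y w g)"
  by (rule ext) (simp add: gconv_def sum_distrib_left mult.assoc)

lemma gconv_scale_right: "gconv G w (\<lambda>g. c * y g) = (\<lambda>g. c * gconv G w y g)"
  by (rule ext) (simp add: gconv_def sum_distrib_left mult.left_commute)

lemma gconv_ge_term:
  assumes "\<And>g. g \<in> C \<Longrightarrow> 0 \<le> y g" "\<And>g. g \<in> C \<Longrightarrow> 0 \<le> z g" "g \<in> C" "h \<in> C"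
  shows "y h * z (inv h \<otimes> g) \<le> gconv G y z g"
  using assms by (simp add: gconv_in) (intro member_le_sum fin mult_nonneg_nonneg; simp)

lemma gconv_pos_iff:
  assumes "\<And>g. g \<in> C \<Longrightarrow> 0 \<le> y g" "\<And>g. g \<in> C \<Longrightarrow> 0 \<le> z g" "g \<in> C"
  shows "0 < gconv G y z g \<longleftrightarrow> (\<exists>h\<in>C. 0 < y h \<and> 0 < z (inv h \<otimes> g))"
proof
  assume "0 < gconv G y z g"
  then have "0 < (\<Sum>h\<in>C. y h * z (inv h \<otimes> g))" using assms by (simp add: gconv_in)
  then obtain h where h: "h \<in> C" "y h * z (inv h \<otimes> g) \<noteq> 0"
    by (metis (no_types, lifting) less_irrefl sum.neutral)
  then show "\<exists>h\<in>C. 0 < y h \<and> 0 < z (inv h \<otimes> g)"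
    using assms by (intro bexI[OF _ h(1)]) (auto simp: order.strict_iff_order)
next
  assume "\<exists>h\<in>C. 0 < y h \<and> 0 < z (inv h \<otimes> g)"
  then obtain h where "h \<in> C" "0 < y h" "0 < z (inv h \<otimes> g)" by blast
  then show "0 < gconv G y z g"
  proof -
    have "y h * z (inv h \<otimes> g) \<le> gconv G y z g"
      by (rule gconv_ge_term) (use assms \<open>h \<in> C\<close> in auto)
    then show ?thesis using \<open>0 < y h\<close> \<open>0 < z (inv h \<otimes> g)\<close> by (smt (verit) mult_pos_pos)
  qed
qed

end

context fg begin

lemma gpow_pow_lb:
  assumes y: "y \<in> gsimplex G" and s: "s \<in> C"
  shows "(y s) ^ n \<le> gpow G y n (s [^] n)"
proof (induction n)
  case 0 then show ?case by (simp add: gunit_def)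
next
  case (Suc n)
  have nn: "0 \<le> y s" using gsimplex_bounds[OF y] by simp
  have "y s * gpow G y n (inv s \<otimes> s [^] Suc n) \<le> gconv G y (gpow G y n) (s [^] Suc n)"
    by (rule gconv_ge_term) (use s y gpow_gsimplex[OF y] in \<open>auto simp: gsimplex_bounds\<close>)
  moreover have "inv s \<otimes> s [^] Suc n = s [^] n"
    using s by (subst nat_pow_Suc2[OF s]) (simp add: m_assoc[symmetric])
  ultimately show ?case using Suc nn by simp (meson mult_left_mono order.trans)
qed

lemma exists_pos: assumes "y \<in> gsimplex G" shows "\<exists>s\<in>C. 0 < y s"
proof (rule ccontr)
  assume "\<not> ?thesis"
  then have "\<forall>s\<in>C. y s = 0" using assms by (force simp: gsimplex_iff)
  then show False using assms by (simp add: gsimplex_iff)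
qed

lemma exists_D: assumes x: "x \<in> gsimplex G" shows "\<exists>D>0. 0 < gpow G x D \<one>"
proof -
  obtain s where s: "s \<in> C" "0 < x s" using exists_pos[OF x] by blast
  have "order G > 0" unfolding order_def using fin by (auto simp: card_gt_0_iff)
  moreover have "0 < gpow G x (order G) \<one>"
    using gpow_pow_lb[OF x s(1), of "order G"] pow_order_eq_1[OF s(1)] s(2)
    by (smt (verit) zero_less_power)
  ultimately show ?thesis by blast
qed

definition sp :: "('a \<Rightarrow> real) \<Rightarrow> 'a set" where "sp y = {g\<in>C. 0 < y g}"

lemma sp_cong:
  assumes "y \<in> gsimplex G" "z \<in> gsimplex G" "z' \<in> gsimplex G" "sp z = sp z'"
  shows "sp (gconv G y z) = sp (gconv G y z')"
proof -
  have "0 < gconv G y z g \<longleftrightarrow> 0 < gconv G y z' g" if g: "g \<in> C" for g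
  proof -
    have "0 < gconv G y z g \<longleftrightarrow> (\<exists>h\<in>C. 0 < y h \<and> 0 < z (inv h \<otimes> g))"
      by (rule gconv_pos_iff) (use assms g in \<open>auto simp: gsimplex_bounds\<close>)
    also have "\<dots> \<longleftrightarrow> (\<exists>h\<in>C. 0 < y h \<and> 0 < z' (inv h \<otimes> g))"
      using assms(4) g unfolding sp_def by (metis (mono_tags, lifting) inv_closed m_closed mem_Collect_eq)
    also have "\<dots> \<longleftrightarrow> 0 < gconv G y z' g"
      by (rule gconv_pos_iff[symmetric]) (use assms g in \<open>auto simp: gsimplex_bounds\<close>)
    finally show ?thesis .
  qed
  then show ?thesis unfolding sp_def by auto
qed

lemma sp_sub: "sp y \<subseteq> C" by (auto simp: sp_def)

context
  fixes \<nu> assumes nu: "\<nu> \<in> gsimplex G" and nu1: "0 < \<nu> \<one>"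
begin

lemma nu_pow: "gpow G \<nu> m \<in> gsimplex G" by (rule gpow_gsimplex[OF nu])

lemma sp_mono: "sp (gpow G \<nu> m) \<subseteq> sp (gpow G \<nu> (Suc m))"
proof
  fix g assume "g \<in> sp (gpow G \<nu> m)"
  then have g: "g \<in> C" "0 < gpow G \<nu> m g" by (auto simp: sp_def)
  have "\<nu> \<one> * gpow G \<nu> m (inv \<one> \<otimes> g) \<le> gconv G \<nu> (gpow G \<nu> m) g"
    by (rule gconv_ge_term) (use g nu nu_pow in \<open>auto simp: gsimplex_bounds\<close>)
  then have "0 < gpow G \<nu> (Suc m) g" using g nu1 by simp (smt (verit) mult_pos_pos)
  then show "g \<in> sp (gpow G \<nu> (Suc m))" using g by (simp add: sp_def)
qed

lemma sp_stable:
  assumes "sp (gpow G \<nu> m) = sp (gpow G \<nu> (Suc m))" "m \<le> k"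
  shows "sp (gpow G \<nu> k) = sp (gpow G \<nu> m)"
  using assms(2)
proof (induction k rule: dec_induct)
  case base then show ?case by simp
next
  case (step k)
  have "sp (gpow G \<nu> (Suc k)) = sp (gconv G \<nu> (gpow G \<nu> k))" by simp
  also have "\<dots> = sp (gconv G \<nu> (gpow G \<nu> m))"
    by (rule sp_cong) (use nu nu_pow step.IH in auto)
  also have "\<dots> = sp (gpow G \<nu> m)" using assms(1) by simp
  finally show ?case .
qed

lemma sp_exists_stable: "\<exists>m<card C. sp (gpow G \<nu> m) = sp (gpow G \<nu> (Suc m))"
proof (rule ccontr)
  assume "\<not> ?thesis"
  then have ne: "\<And>m. m < card C \<Longrightarrow> sp (gpow G \<nu> m) \<subset> sp (gpow G \<nu> (Suc m))"
    using sp_mono by blast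
  have "m \<le> card C \<Longrightarrow> m + 1 \<le> card (sp (gpow G \<nu> m))" for m
  proof (induction m)
    case 0
    have "\<one> \<in> sp (gpow G \<nu> 0)" by (simp add: sp_def gunit_def)
    then have "sp (gpow G \<nu> 0) \<noteq> {}" by blast
    then show ?case using finite_subset[OF sp_sub fin] by (simp add: card_gt_0_iff Suc_le_eq)
  next
    case (Suc m)
    have "card (sp (gpow G \<nu> m)) < card (sp (gpow G \<nu> (Suc m)))"
      using ne[of m] Suc.prems by (intro psubset_card_mono finite_subset[OF sp_sub fin]) auto
    then show ?case using Suc by simp
  qed
  from this[of "card C"] have "card C + 1 \<le> card (sp (gpow G \<nu> (card C)))" by simp
  moreover have "card (sp (gpow G \<nu> (card C))) \<le> card C" by (intro card_mono fin sp_sub)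
  ultimately show False by simp
qed

definition "K = sp (gpow G \<nu> (card C))"

lemma K_stable: "k \<ge> card C \<Longrightarrow> sp (gpow G \<nu> k) = K"
proof -
  assume k: "k \<ge> card C"
  obtain m where m: "m < card C" "sp (gpow G \<nu> m) = sp (gpow G \<nu> (Suc m))"
    using sp_exists_stable by blast
  show ?thesis unfolding K_def using sp_stable[OF m(2), of k] sp_stable[OF m(2), of "card C"] m k by simp
qed

lemma K_sub: "K \<subseteq> C" by (simp add: K_def sp_sub)
lemma K_fin: "finite K" using K_sub fin finite_subset by blast

lemma one_K: "\<one> \<in> K"
proof -
  have "(\<nu> \<one>) ^ card C \<le> gpow G \<nu> (card C) (\<one> [^] card C)"
    by (rule gpow_pow_lb[OF nu]) simp
  then have "0 < gpow G \<nu> (card C) \<one>" using nu1 by simp (smt (verit) zero_less_power)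
  then show ?thesis by (simp add: K_def sp_def)
qed

lemma K_mult: assumes "k1 \<in> K" "k2 \<in> K" shows "k1 \<otimes> k2 \<in> K"
proof -
  let ?B = "gpow G \<nu> (card C)"
  have k: "k1 \<in> C" "k2 \<in> C" "0 < ?B k1" "0 < ?B k2" using assms by (auto simp: K_def sp_def)
  have "?B k1 * ?B (inv k1 \<otimes> (k1 \<otimes> k2)) \<le> gconv G ?B ?B (k1 \<otimes> k2)"
    by (rule gconv_ge_term) (use k nu_pow in \<open>auto simp: gsimplex_bounds\<close>)
  moreover have "inv k1 \<otimes> (k1 \<otimes> k2) = k2" using k by (simp add: m_assoc[symmetric])
  ultimately have "0 < gpow G \<nu> (card C + card C) (k1 \<otimes> k2)"
    using k by (simp add: gpow_add) (smt (verit) mult_pos_pos)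
  then have "k1 \<otimes> k2 \<in> sp (gpow G \<nu> (card C + card C))" using k by (simp add: sp_def)
  then show ?thesis using K_stable[of "card C + card C"] by simp
qed

lemma K_inv: assumes k: "k \<in> K" shows "inv k \<in> K"
proof -
  have kC: "k \<in> C" using k K_sub by blast
  have "(\<lambda>l. k \<otimes> l) ` K = K"
  proof (rule endo_inj_surj[OF K_fin])
    show "(\<lambda>l. k \<otimes> l) ` K \<subseteq> K" using K_mult k by blast
    show "inj_on (\<lambda>l. k \<otimes> l) K" using kC K_sub by (intro inj_onI) (metis Units_eq Units_l_cancel subsetD)
  qed
  then obtain l where l: "l \<in> K" "k \<otimes> l = \<one>" using one_K by (metis imageE)
  then have "l = inv k" using kC K_sub by (metis inv_equality inv_unique' r_inv subsetD)
  then show ?thesis using l by simp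
qed


definition "inK y \<longleftrightarrow> (\<forall>g. g \<notin> K \<longrightarrow> y g = 0)"
definition "U = (\<lambda>g. if g \<in> K then 1 / real (card K) else 0)"
definition "B = gpow G \<nu> (card C)"

lemma cardK: "0 < card K" using K_fin one_K by (auto simp: card_gt_0_iff)

lemma inK_onC: "inK y \<Longrightarrow> onC y" using K_sub by (auto simp: inK_def onC_def)

lemma U_inK: "inK U" by (simp add: inK_def U_def)
lemma U_mass: "(\<Sum>g\<in>C. U g) = 1"
proof -
  have "(\<Sum>g\<in>C. U g) = (\<Sum>g\<in>K. 1 / real (card K))"
    unfolding U_def using K_sub by (simp add: sum.If_cases fin Int_absorb1)
  then show ?thesis using cardK by simp
qed

lemma B_simplex: "B \<in> gsimplex G" by (simp add: B_def nu_pow)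

lemma Bj_eq: "gpow G B j = gpow G \<nu> (card C * j)" by (simp add: B_def gpow_mult)

lemma Bj_inK: "inK (gpow G B j)"
proof (cases "j = 0")
  case True then show ?thesis using one_K by (auto simp: inK_def gunit_def)
next
  case False
  then have sp: "sp (gpow G \<nu> (card C * j)) = K" by (intro K_stable) simp
  show ?thesis unfolding inK_def
  proof (intro allI impI)
    fix g assume g: "g \<notin> K"
    have s: "gpow G \<nu> (card C * j) \<in> gsimplex G" by (rule nu_pow)
    show "gpow G B j g = 0"
    proof (cases "g \<in> C")
      case True
      then have "\<not> 0 < gpow G \<nu> (card C * j) g" using sp g by (auto simp: sp_def)
      then show ?thesis using gsimplex_bounds(1)[OF s, of g] by (simp add: Bj_eq)
    qed (use s in \<open>auto simp: gsimplex_iff onC_def Bj_eq\<close>)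
  qed
qed

lemma B_inK: "inK B" using Bj_inK[of 1] gpow_1[of B] B_simplex by (simp add: gsimplex_iff)

lemma reindex_invl2:
  assumes "g \<in> C"
  shows "(\<Sum>h\<in>C. F h (inv h \<otimes> g)) = (\<Sum>k\<in>C. F (g \<otimes> inv k) k)"
proof -
  have "bij_betw (\<lambda>k. g \<otimes> inv k) C C"
    using assms by (intro bij_betwI[where g="\<lambda>h. inv h \<otimes> g"])
      (auto simp: m_assoc inv_mult_group, simp add: m_assoc[symmetric])
  then have "(\<Sum>k\<in>C. F (g \<otimes> inv k) (inv (g \<otimes> inv k) \<otimes> g)) = (\<Sum>h\<in>C. F h (inv h \<otimes> g))"
    by (rule sum.reindex_bij_betw)
  moreover have "k \<in> C \<Longrightarrow> inv (g \<otimes> inv k) \<otimes> g = k" for k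
    using assms by (simp add: inv_mult_group m_assoc)
  ultimately show ?thesis by simp
qed

lemma K_iff1: "h \<in> K \<Longrightarrow> g \<in> C \<Longrightarrow> (inv h \<otimes> g \<in> K) = (g \<in> K)"
proof -
  assume h: "h \<in> K" and g: "g \<in> C"
  have hC: "h \<in> C" using h K_sub by blast
  show ?thesis
  proof
    assume "inv h \<otimes> g \<in> K"
    then have "h \<otimes> (inv h \<otimes> g) \<in> K" using K_mult h by blast
    then show "g \<in> K" using hC g by (simp add: m_assoc[symmetric])
  qed (use K_mult K_inv h in blast)
qed

lemma K_iff2: "k \<in> K \<Longrightarrow> g \<in> C \<Longrightarrow> (g \<otimes> inv k \<in> K) = (g \<in> K)"
proof -
  assume k: "k \<in> K" and g: "g \<in> C"
  have kC: "k \<in> C" using k K_sub by blast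
  show ?thesis
  proof
    assume "g \<otimes> inv k \<in> K"
    then have "(g \<otimes> inv k) \<otimes> k \<in> K" using K_mult k by blast
    then show "g \<in> K" using kC g by (simp add: m_assoc)
  qed (use K_mult K_inv k in blast)
qed

lemma conv_U_left: assumes "inK y" shows "gconv G U y g = (\<Sum>k\<in>C. y k) * U g"
proof (cases "g \<in> C")
  case False
  then show ?thesis using K_sub by (auto simp: gconv_out U_def)
next
  case True
  have "gconv G U y g = (\<Sum>k\<in>C. U (g \<otimes> inv k) * y k)"
    using True by (simp add: gconv_in reindex_invl2[where F="\<lambda>a b. U a * y b"])
  also have "\<dots> = (\<Sum>k\<in>C. U g * y k)"
  proof (intro sum.cong refl)
    fix k assume k: "k \<in> C"
    show "U (g \<otimes> inv k) * y k = U g * y k"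
      using assms K_iff2[OF _ True, of k] by (cases "k \<in> K") (auto simp: inK_def U_def)
  qed
  also have "\<dots> = (\<Sum>k\<in>C. y k * U g)" by (simp add: mult.commute)
  also have "\<dots> = (\<Sum>k\<in>C. y k) * U g" by (rule sum_distrib_right[symmetric])
  finally show ?thesis .
qed

lemma conv_U_right: assumes "inK y" shows "gconv G y U g = (\<Sum>k\<in>C. y k) * U g"
proof (cases "g \<in> C")
  case False
  then show ?thesis using K_sub by (auto simp: gconv_out U_def)
next
  case True
  have "gconv G y U g = (\<Sum>h\<in>C. y h * U g)"
    unfolding gconv_in[OF True]
  proof (intro sum.cong refl)
    fix h assume h: "h \<in> C"
    show "y h * U (inv h \<otimes> g) = y h * U g"
      using assms K_iff1[OF _ True, of h] by (cases "h \<in> K") (auto simp: inK_def U_def)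
  qed
  then show ?thesis by (simp add: sum_distrib_right)
qed

definition "mB = Min (B ` K)"
definition "c = real (card K) * mB"
definition "E = (\<lambda>g. B g - c * U g)"

lemma mB_pos: "0 < mB"
proof -
  have "\<forall>b\<in>B ` K. 0 < b"
    using K_stable[of "card C"] by (auto simp: B_def sp_def)
  then show ?thesis unfolding mB_def using K_fin one_K by (subst Min_gr_iff) auto
qed

lemma c_pos: "0 < c" using mB_pos cardK by (simp add: c_def)

lemma E_nonneg: "0 \<le> E g"
proof (cases "g \<in> K")
  case True
  have "mB \<le> B g" unfolding mB_def using True K_fin by (intro Min_le) auto
  then show ?thesis using True cardK by (simp add: E_def c_def U_def)
next
  case False then show ?thesis using B_inK by (simp add: E_def U_def inK_def)
qed

lemma n1_E: "n1 E = 1 - c"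
proof -
  have "n1 E = (\<Sum>g\<in>C. E g)" unfolding n1_def using E_nonneg by simp
  also have "\<dots> = (\<Sum>g\<in>C. B g) - c * (\<Sum>g\<in>C. U g)"
    by (simp add: E_def sum_subtractf sum_distrib_left)
  also have "\<dots> = 1 - c" using B_simplex U_mass by (simp add: gsimplex_iff)
  finally show ?thesis .
qed

lemma c_le1: "c \<le> 1" using n1_E n1_nonneg[of E] by simp

lemma Bj_mass: "(\<Sum>g\<in>C. gpow G B j g) = 1" using gpow_gsimplex[OF B_simplex] by (simp add: gsimplex_iff)

definition "dd j = (\<lambda>g. gpow G B j g - U g)"

lemma dd_Suc: "dd (Suc j) = gconv G E (dd j)"
proof -
  have UU: "gconv G U U g = U g" for g using conv_U_left[OF U_inK] U_mass by simp
  have UB: "gconv G U (gpow G B j) g = U g" for g using conv_U_left[OF Bj_inK] Bj_mass by simp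
  have BU: "gconv G B U g = U g" for g using conv_U_right[OF B_inK] B_simplex by (simp add: gsimplex_iff)
  show ?thesis
    unfolding dd_def E_def
    by (simp add: gconv_diff_left gconv_diff_right gconv_scale_left UU UB BU)
qed

lemma dd_bound: "n1 (dd j) \<le> 2 * (1 - c) ^ j"
proof (induction j)
  case 0
  have "n1 (dd 0) \<le> n1 (gunit G) + n1 U"
    unfolding n1_def dd_def by (simp add: sum.distrib[symmetric] sum_mono abs_triangle_ineq4)
  also have "\<dots> = 2"
    using n1_gsimplex[OF gunit_gsimplex] U_mass by (simp add: n1_def U_def)
  finally show ?case by simp
next
  case (Suc j)
  have "n1 (dd (Suc j)) \<le> n1 E * n1 (dd j)" unfolding dd_Suc by (rule n1_gconv)
  also have "\<dots> \<le> (1 - c) * (2 * (1 - c) ^ j)"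
    using Suc c_le1 by (simp add: n1_E mult_left_mono)
  finally show ?case by simp
qed

end


lemma periodic_limit:
  assumes x: "x \<in> gsimplex G"
  shows "\<exists>T>0. \<exists>Lp::nat \<Rightarrow> 'a \<Rightarrow> real. \<exists>\<beta>. 0 \<le> \<beta> \<and> \<beta> < 1 \<and>
     (\<forall>m g. \<bar>gpow G x m g - Lp (m mod T) g\<bar> \<le> 2 * \<beta> ^ (m div T))"
proof -
  obtain D where D: "D > 0" "0 < gpow G x D \<one>" using exists_D[OF x] by blast
  define \<nu> where "\<nu> = gpow G x D"
  have nu: "\<nu> \<in> gsimplex G" "0 < \<nu> \<one>" using D x gpow_gsimplex by (auto simp: \<nu>_def)
  define T where "T = D * card C"
  have T: "T > 0" using D fin one_closed by (auto simp: T_def card_gt_0_iff)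
  define Lp where "Lp = (\<lambda>r. gconv G (U \<nu>) (gpow G x r))"
  define \<beta> where "\<beta> = 1 - c \<nu>"
  have \<beta>: "0 \<le> \<beta>" "\<beta> < 1" using c_pos[OF nu] c_le1[OF nu] by (auto simp: \<beta>_def)
  have "\<bar>gpow G x m g - Lp (m mod T) g\<bar> \<le> 2 * \<beta> ^ (m div T)" for m g
  proof -
    define j where "j = m div T"
    define r where "r = m mod T"
    have m: "m = T * j + r" by (simp add: j_def r_def)
    have "gpow G x (T * j) = gpow G (B \<nu>) j"
      using nu unfolding T_def \<nu>_def by (simp add: B_def gpow_mult mult.assoc)
    then have "gpow G x m = gconv G (gpow G (B \<nu>) j) (gpow G x r)"
      by (simp add: m gpow_add)
    then have "gpow G x m g - Lp r g = gconv G (dd \<nu> j) (gpow G x r) g"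
      by (simp add: Lp_def dd_def[OF nu] gconv_diff_left)
    then have "\<bar>gpow G x m g - Lp r g\<bar> \<le> n1 (gconv G (dd \<nu> j) (gpow G x r))"
      using abs_le_n1[OF onC_gconv] by simp
    also have "\<dots> \<le> n1 (dd \<nu> j) * n1 (gpow G x r)" by (rule n1_gconv)
    also have "\<dots> = n1 (dd \<nu> j)" using n1_gsimplex[OF gpow_gsimplex[OF x]] by simp
    also have "\<dots> \<le> 2 * \<beta> ^ j" using dd_bound[OF nu] by (simp add: \<beta>_def)
    finally show ?thesis by (simp add: j_def r_def)
  qed
  then show ?thesis using T \<beta> by blast
qed

end

no_notation Infinite_Set_Sum.abs_summable_on (infix \<open>abs'_summable'_on\<close> 50)

lemma infsum_suminf_norm:
  fixes f :: "nat \<Rightarrow> 'b::banach"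
  assumes "summable (\<lambda>n. norm (f n))"
  shows "infsum f UNIV = suminf f" "(f has_sum suminf f) UNIV"
proof -
  have "summable f" using assms summable_norm_cancel by blast
  then show "(f has_sum suminf f) UNIV"
    using norm_summable_imp_has_sum[OF assms] summable_sums by blast
  then show "infsum f UNIV = suminf f" by (rule infsumI)
qed

lemma swap_sum:
  fixes V :: "nat \<Rightarrow> 'b::banach" and a :: "nat \<Rightarrow> real" and c :: "nat \<Rightarrow> nat \<Rightarrow> real"
  assumes a0: "\<And>k. 0 \<le> a k" and asum: "summable a"
    and c0: "\<And>k m. 0 \<le> c k m" and csum: "\<And>k. c k sums 1"
    and V: "\<And>m. norm (V m) \<le> 1"
  shows "summable (\<lambda>m. \<Sum>k. a k * c k m)"
    and "(\<lambda>k. a k *\<^sub>R (\<Sum>m. c k m *\<^sub>R V m)) sums (\<Sum>m. (\<Sum>k. a k * c k m) *\<^sub>R V m)"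
proof -
  have ck_summ: "summable (c k)" for k using csum sums_summable by blast
  have ck_sum: "suminf (c k) = 1" for k using csum sums_unique by (metis)
  have w_abs: "(\<lambda>(k,m). a k * c k m) abs_summable_on (UNIV \<times> UNIV)"
  proof (rule Infinite_Sum.abs_summable_on_Sigma_iff[THEN iffD2], intro conjI ballI)
    fix k :: nat
    have "summable (\<lambda>m. norm (a k * c k m))"
      using ck_summ[of k] a0 c0 by (simp add: abs_mult summable_mult)
    then show "(\<lambda>m. (case (k, m) of (k, m) \<Rightarrow> a k * c k m)) abs_summable_on UNIV"
      by (simp add: summable_on_UNIV_nonneg_real_iff)
  next
    have "infsum (\<lambda>m. norm (case (k, m) of (k, m) \<Rightarrow> a k * c k m)) UNIV = a k" for k
    proof -
      have "infsum (\<lambda>m. norm (case (k, m) of (k, m) \<Rightarrow> a k * c k m)) UNIV = infsum (\<lambda>m. a k * c k m) UNIV"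
        using a0 c0 by (intro infsum_cong) simp
      also have "\<dots> = (\<Sum>m. a k * c k m)"
        using ck_summ[of k] a0 c0 by (intro infsum_suminf_norm) (simp add: abs_mult summable_mult)
      also have "\<dots> = a k" using ck_summ[of k] ck_sum[of k] by (simp add: suminf_mult)
      finally show ?thesis .
    qed
    then show "(\<lambda>k. infsum (\<lambda>m. norm (case (k, m) of (k, m) \<Rightarrow> a k * c k m)) UNIV) abs_summable_on UNIV"
      using asum a0 by (simp add: summable_on_UNIV_nonneg_real_iff)
  qed
  have f_abs: "(\<lambda>(k,m). (a k * c k m) *\<^sub>R V m) abs_summable_on (UNIV \<times> UNIV)"
  proof (rule Infinite_Sum.abs_summable_on_comparison_test[OF w_abs])
    fix km :: "nat \<times> nat"
    obtain k m where km: "km = (k,m)" by fastforce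
    have "norm ((a k * c k m) *\<^sub>R V m) \<le> a k * c k m"
      using V[of m] a0[of k] c0[of k m] by (simp add: mult_left_le)
    then show "norm (case km of (k, m) \<Rightarrow> (a k * c k m) *\<^sub>R V m) \<le> norm (case km of (k, m) \<Rightarrow> a k * c k m)"
      using a0[of k] c0[of k m] by (simp add: km)
  qed
  then have f_summ: "(\<lambda>(k,m). (a k * c k m) *\<^sub>R V m) summable_on (UNIV \<times> UNIV)"
    by (rule abs_summable_summable)
  have w_summ: "(\<lambda>(k,m). a k * c k m) summable_on (UNIV \<times> UNIV)"
    using w_abs by (rule abs_summable_summable)
  have w_swap: "(\<lambda>(m,k). a k * c k m) summable_on (UNIV \<times> UNIV)"
    using w_summ by (subst summable_on_swap) simp
  have colsumm: "summable (\<lambda>k. a k * c k m)" for m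
  proof (rule summable_comparison_test[OF _ asum])
    have "c k m \<le> 1" for k
      using sum_le_suminf[OF ck_summ[of k], of "{m}"] ck_sum[of k] c0 by simp
    then show "\<exists>N. \<forall>n\<ge>N. norm (a n * c n m) \<le> a n"
      using a0 c0 by (auto intro!: exI[of _ 0] mult_left_le)
  qed
  have col_inf: "infsum (\<lambda>k. a k * c k m) UNIV = (\<Sum>k. a k * c k m)" for m
    using colsumm[of m] a0 c0 by (intro infsum_suminf_norm) simp
  have "(\<lambda>m. infsum (\<lambda>k. a k * c k m) UNIV) summable_on UNIV"
    using summable_on_Sigma_banach[OF w_swap] by simp
  then have W_summ: "summable (\<lambda>m. \<Sum>k. a k * c k m)"
    using a0 c0 by (simp add: col_inf summable_on_UNIV_nonneg_real_iff suminf_nonneg colsumm)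
  then show "summable (\<lambda>m. \<Sum>k. a k * c k m)" .
  have Wn: "summable (\<lambda>m. norm ((\<Sum>k. a k * c k m) *\<^sub>R V m))"
  proof (rule summable_comparison_test[OF _ W_summ])
    show "\<exists>N. \<forall>n\<ge>N. norm (norm ((\<Sum>k. a k * c k n) *\<^sub>R V n)) \<le> (\<Sum>k. a k * c k n)"
    proof (intro exI[of _ 0] allI impI)
      fix n :: nat
      have "0 \<le> (\<Sum>k. a k * c k n)" using a0 c0 colsumm by (intro suminf_nonneg) auto
      then show "norm (norm ((\<Sum>k. a k * c k n) *\<^sub>R V n)) \<le> (\<Sum>k. a k * c k n)"
        using V[of n] by (simp add: mult_left_le)
    qed
  qed
  have rown: "summable (\<lambda>m. norm (c k m *\<^sub>R V m))" for k
  proof (rule summable_comparison_test[OF _ ck_summ[of k]])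
    show "\<exists>N. \<forall>n\<ge>N. norm (norm (c k n *\<^sub>R V n)) \<le> c k n"
      using c0 V by (auto intro!: exI[of _ 0] mult_left_le)
  qed
  have Sk: "norm (\<Sum>m. c k m *\<^sub>R V m) \<le> 1" for k
  proof -
    have "norm (\<Sum>m. c k m *\<^sub>R V m) \<le> (\<Sum>m. norm (c k m *\<^sub>R V m))"
      by (rule summable_norm[OF rown])
    also have "\<dots> \<le> (\<Sum>m. c k m)"
      using rown ck_summ c0 V by (intro suminf_le) (auto intro: mult_left_le)
    finally show ?thesis using ck_sum by simp
  qed
  have outn: "summable (\<lambda>k. norm (a k *\<^sub>R (\<Sum>m. c k m *\<^sub>R V m)))"
  proof (rule summable_comparison_test[OF _ asum])
    show "\<exists>N. \<forall>n\<ge>N. norm (norm (a n *\<^sub>R (\<Sum>m. c n m *\<^sub>R V m))) \<le> a n"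
      using a0 Sk by (auto intro!: exI[of _ 0] mult_left_le)
  qed
  have "infsum (\<lambda>k. infsum (\<lambda>m. (a k * c k m) *\<^sub>R V m) UNIV) UNIV
      = infsum (\<lambda>m. infsum (\<lambda>k. (a k * c k m) *\<^sub>R V m) UNIV) UNIV"
    using f_summ by (intro infsum_swap_banach) simp
  moreover have "infsum (\<lambda>m. (a k * c k m) *\<^sub>R V m) UNIV = a k *\<^sub>R (\<Sum>m. c k m *\<^sub>R V m)" for k
  proof -
    have "infsum (\<lambda>m. (a k * c k m) *\<^sub>R V m) UNIV = infsum (\<lambda>m. a k *\<^sub>R (c k m *\<^sub>R V m)) UNIV" by simp
    also have "\<dots> = a k *\<^sub>R infsum (\<lambda>m. c k m *\<^sub>R V m) UNIV"
      by (rule infsum_scaleR_right)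
    also have "\<dots> = a k *\<^sub>R (\<Sum>m. c k m *\<^sub>R V m)"
      using infsum_suminf_norm(1)[OF rown] by simp
    finally show ?thesis .
  qed
  moreover have "infsum (\<lambda>k. (a k * c k m) *\<^sub>R V m) UNIV = (\<Sum>k. a k * c k m) *\<^sub>R V m" for m
    using infsum_scaleR_left[of "V m" "\<lambda>k. a k * c k m" UNIV] col_inf[of m] colsumm[of m] a0 c0
    by (simp add: summable_on_UNIV_nonneg_real_iff)
  ultimately have "infsum (\<lambda>k. a k *\<^sub>R (\<Sum>m. c k m *\<^sub>R V m)) UNIV = infsum (\<lambda>m. (\<Sum>k. a k * c k m) *\<^sub>R V m) UNIV"
    by simp
  then have "(\<Sum>k. a k *\<^sub>R (\<Sum>m. c k m *\<^sub>R V m)) = (\<Sum>m. (\<Sum>k. a k * c k m) *\<^sub>R V m)"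
    using infsum_suminf_norm(1)[OF outn] infsum_suminf_norm(1)[OF Wn] by simp
  then show "(\<lambda>k. a k *\<^sub>R (\<Sum>m. c k m *\<^sub>R V m)) sums (\<Sum>m. (\<Sum>k. a k * c k m) *\<^sub>R V m)"
    using summable_sums[OF summable_norm_cancel[OF outn]] by simp
qed

definition prob :: "(nat \<Rightarrow> real) \<Rightarrow> bool" where
  "prob q \<longleftrightarrow> (\<forall>m. 0 \<le> q m) \<and> q sums 1"

primrec cpow :: "(nat \<Rightarrow> real) \<Rightarrow> nat \<Rightarrow> nat \<Rightarrow> real" where
  "cpow q 0 = (\<lambda>m. if m = 0 then 1 else 0)"
| "cpow q (Suc k) = (\<lambda>m. \<Sum>i\<le>m. q i * cpow q k (m - i))"

lemma prob_summable: "prob q \<Longrightarrow> summable q" by (auto simp: prob_def sums_summable)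
lemma prob_norm_summable: "prob q \<Longrightarrow> summable (\<lambda>m. norm (q m))"
  using prob_summable by (auto simp: prob_def)
lemma prob_suminf: "prob q \<Longrightarrow> suminf q = 1" by (auto simp: prob_def sums_unique[symmetric])
lemma prob_nonneg: "prob q \<Longrightarrow> 0 \<le> q m" by (auto simp: prob_def)
lemma prob_le1: "prob q \<Longrightarrow> q m \<le> 1"
  using sum_le_suminf[OF prob_summable, of q "{m}"] prob_suminf[of q] prob_nonneg[of q] by simp

lemma prob_delta: "prob (\<lambda>m. if m = j then 1 else 0)"
  unfolding prob_def using sums_single[of j "\<lambda>_. 1::real"] by simp

lemma prob_cpow: "prob q \<Longrightarrow> prob (cpow q k)"
proof (induction k)
  case 0 then show ?case using prob_delta[of 0] by simp
next
  case (Suc k)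
  have "(\<lambda>m. \<Sum>i\<le>m. q i * cpow q k (m - i)) sums ((\<Sum>m. q m) * (\<Sum>m. cpow q k m))"
    by (rule Cauchy_product_sums[OF prob_norm_summable prob_norm_summable]) (use Suc in auto)
  then show ?case using Suc by (auto simp: prob_def prob_suminf prob_nonneg intro!: sum_nonneg)
qed

definition fS :: "(nat \<Rightarrow> real) \<Rightarrow> 'b::{real_normed_field,banach} \<Rightarrow> 'b" where
  "fS a s = (\<Sum>k. a k *\<^sub>R s ^ k)"

primrec qn :: "(nat \<Rightarrow> real) \<Rightarrow> nat \<Rightarrow> nat \<Rightarrow> real" where
  "qn a 0 = (\<lambda>m. if m = 1 then 1 else 0)"
| "qn a (Suc n) = (\<lambda>m. \<Sum>k. a k * cpow (qn a n) k m)"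

lemma compose_prob:
  assumes a: "prob a" and q: "prob q"
  shows "prob (\<lambda>m. \<Sum>k. a k * cpow q k m)"
proof -
  have c: "\<And>k. cpow q k sums 1" "\<And>k m. 0 \<le> cpow q k m"
    using prob_cpow[OF q] by (auto simp: prob_def)
  note sw = swap_sum[where V="\<lambda>_. 1::real" and c="cpow q", OF prob_nonneg[OF a] prob_summable[OF a] c(2) c(1)]
  have "(\<lambda>k. a k * (\<Sum>m. cpow q k m)) sums (\<Sum>m. \<Sum>k. a k * cpow q k m)"
    using sw(2) by simp
  moreover have "(\<Sum>m. cpow q k m) = 1" for k using c(1) sums_unique by metis
  ultimately have "(\<Sum>m. \<Sum>k. a k * cpow q k m) = 1" using a
    by (simp add: prob_def sums_unique2)
  moreover have "0 \<le> (\<Sum>k. a k * cpow q k m)" for m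
  proof (rule suminf_nonneg)
    show "summable (\<lambda>k. a k * cpow q k m)"
    proof (rule summable_comparison_test[OF _ prob_summable[OF a]])
      show "\<exists>N. \<forall>n\<ge>N. norm (a n * cpow q n m) \<le> a n"
        using prob_nonneg[OF a] c(2) prob_le1[OF prob_cpow[OF q]]
        by (auto intro!: exI[of _ 0] mult_left_le)
    qed
  qed (use prob_nonneg[OF a] c(2) in auto)
  ultimately show ?thesis using sw(1) by (auto simp: prob_def summable_sums_iff)
qed

lemma prob_qn: "prob a \<Longrightarrow> prob (qn a n)"
  by (induction n) (simp_all add: prob_delta compose_prob)

lemma scalar_pow:
  fixes s :: "'b::{real_normed_field,banach}"
  assumes q: "prob q" and s: "norm s \<le> 1"
  shows "(\<Sum>m. q m *\<^sub>R s ^ m) ^ k = (\<Sum>m. cpow q k m *\<^sub>R s ^ m)"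
proof (induction k)
  case 0
  have "(\<Sum>m. cpow q 0 m *\<^sub>R s ^ m) = (\<Sum>m. if m = 0 then 1 else 0)"
    by (intro suminf_cong) simp
  also have "\<dots> = 1" using sums_single[of 0 "\<lambda>_. 1::'b"] sums_unique by fastforce
  finally show ?case by simp
next
  case (Suc k)
  have ns: "summable (\<lambda>m. norm (p m *\<^sub>R s ^ m))" if "prob p" for p
  proof (rule summable_comparison_test[OF _ prob_summable[OF that]])
    show "\<exists>N. \<forall>n\<ge>N. norm (norm (p n *\<^sub>R s ^ n)) \<le> p n"
      using that s prob_nonneg[OF that]
      by (auto intro!: exI[of _ 0] mult_left_le simp: norm_power power_le_one)
  qed
  have "(\<Sum>m. q m *\<^sub>R s ^ m) ^ Suc k = (\<Sum>m. q m *\<^sub>R s ^ m) * (\<Sum>m. cpow q k m *\<^sub>R s ^ m)"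
    using Suc by simp
  also have "\<dots> = (\<Sum>m. \<Sum>i\<le>m. (q i *\<^sub>R s ^ i) * (cpow q k (m - i) *\<^sub>R s ^ (m - i)))"
    by (rule Cauchy_product[OF ns[OF q] ns[OF prob_cpow[OF q]]])
  also have "\<dots> = (\<Sum>m. cpow q (Suc k) m *\<^sub>R s ^ m)"
  proof (intro suminf_cong)
    fix m
    have "(\<Sum>i\<le>m. (q i *\<^sub>R s ^ i) * (cpow q k (m - i) *\<^sub>R s ^ (m - i)))
        = (\<Sum>i\<le>m. (q i * cpow q k (m - i)) *\<^sub>R s ^ m)"
      by (intro sum.cong refl) (simp add: power_add[symmetric])
    then show "(\<Sum>i\<le>m. (q i *\<^sub>R s ^ i) * (cpow q k (m - i) *\<^sub>R s ^ (m - i))) = cpow q (Suc k) m *\<^sub>R s ^ m"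
      by (simp add: scaleR_sum_left)
  qed
  finally show ?case .
qed

lemma F_rep:
  fixes s :: "'b::{real_normed_field,banach}"
  assumes a: "prob a" and s: "norm s \<le> 1"
  shows "(fS a ^^ n) s = (\<Sum>m. qn a n m *\<^sub>R s ^ m)"
proof (induction n)
  case 0
  have "(\<Sum>m. qn a 0 m *\<^sub>R s ^ m) = (\<Sum>m. if m = 1 then s ^ m else 0)"
    by (intro suminf_cong) simp
  also have "\<dots> = s" using sums_single[of 1 "\<lambda>m. s ^ m"] sums_unique by fastforce
  finally show ?case by simp
next
  case (Suc n)
  have q: "prob (qn a n)" by (rule prob_qn[OF a])
  have c: "\<And>k. cpow (qn a n) k sums 1" "\<And>k m. 0 \<le> cpow (qn a n) k m"
    using prob_cpow[OF q] by (auto simp: prob_def)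
  have "(fS a ^^ Suc n) s = fS a ((fS a ^^ n) s)" by simp
  also have "\<dots> = (\<Sum>k. a k *\<^sub>R (\<Sum>m. qn a n m *\<^sub>R s ^ m) ^ k)"
    by (simp only: Suc.IH) (simp add: fS_def)
  also have "\<dots> = (\<Sum>k. a k *\<^sub>R (\<Sum>m. cpow (qn a n) k m *\<^sub>R s ^ m))"
    by (simp add: scalar_pow[OF q s])
  also have "\<dots> = (\<Sum>m. (\<Sum>k. a k * cpow (qn a n) k m) *\<^sub>R s ^ m)"
    using swap_sum(2)[where V="\<lambda>m. s ^ m", OF prob_nonneg[OF a] prob_summable[OF a] c(2) c(1)] s
    by (simp add: sums_unique[symmetric] norm_power power_le_one)
  finally show ?case by simp
qed

context fg begin

lemma gconv_series:
  assumes x: "x \<in> gsimplex G" and al: "prob \<alpha>" and be: "prob \<beta>"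
  shows "gconv G (\<lambda>g. \<Sum>m. \<alpha> m * gpow G x m g) (\<lambda>g. \<Sum>m. \<beta> m * gpow G x m g)
       = (\<lambda>g. \<Sum>m. (\<Sum>i\<le>m. \<alpha> i * \<beta> (m - i)) * gpow G x m g)"
proof
  fix g
  let ?X = "gpow G x"
  have Xb: "0 \<le> ?X m g" "?X m g \<le> 1" for m g using gsimplex_bounds[OF gpow_gsimplex[OF x]] by auto
  have ns: "summable (\<lambda>m. norm (p m * ?X m g))" if "prob p" for p g
  proof (rule summable_comparison_test[OF _ prob_summable[OF that]])
    show "\<exists>N. \<forall>n\<ge>N. norm (norm (p n * ?X n g)) \<le> p n"
      using that Xb prob_nonneg[OF that] by (auto intro!: exI[of _ 0] mult_left_le simp: abs_mult)
  qed
  show "gconv G (\<lambda>g. \<Sum>m. \<alpha> m * ?X m g) (\<lambda>g. \<Sum>m. \<beta> m * ?X m g) g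
       = (\<Sum>m. (\<Sum>i\<le>m. \<alpha> i * \<beta> (m - i)) * ?X m g)"
  proof (cases "g \<in> C")
    case False
    then show ?thesis using onC_gpow by (simp add: gconv_out onC_def)
  next
    case True
    have "gconv G (\<lambda>g. \<Sum>m. \<alpha> m * ?X m g) (\<lambda>g. \<Sum>m. \<beta> m * ?X m g) g
       = (\<Sum>h\<in>C. (\<Sum>m. \<alpha> m * ?X m h) * (\<Sum>m. \<beta> m * ?X m (inv h \<otimes> g)))"
      using True by (simp add: gconv_in)
    also have "\<dots> = (\<Sum>h\<in>C. \<Sum>m. \<Sum>i\<le>m. (\<alpha> i * ?X i h) * (\<beta> (m - i) * ?X (m - i) (inv h \<otimes> g)))"
      by (intro sum.cong refl Cauchy_product ns al be)
    also have "\<dots> = (\<Sum>m. \<Sum>h\<in>C. \<Sum>i\<le>m. (\<alpha> i * ?X i h) * (\<beta> (m - i) * ?X (m - i) (inv h \<otimes> g)))"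
      by (intro suminf_sum[symmetric] summable_Cauchy_product ns al be)
    also have "\<dots> = (\<Sum>m. (\<Sum>i\<le>m. \<alpha> i * \<beta> (m - i)) * ?X m g)"
    proof (intro suminf_cong)
      fix m
      have "(\<Sum>h\<in>C. \<Sum>i\<le>m. (\<alpha> i * ?X i h) * (\<beta> (m - i) * ?X (m - i) (inv h \<otimes> g)))
          = (\<Sum>i\<le>m. \<alpha> i * \<beta> (m - i) * (\<Sum>h\<in>C. ?X i h * ?X (m - i) (inv h \<otimes> g)))"
        by (subst sum.swap) (simp add: sum_distrib_left mult_ac)
      also have "\<dots> = (\<Sum>i\<le>m. \<alpha> i * \<beta> (m - i) * ?X m g)"
      proof (intro sum.cong refl)
        fix i assume "i \<in> {..m}"
        then have "?X m = gconv G (?X i) (?X (m - i))" using gpow_add[of x i "m - i"] by simp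
        then show "\<alpha> i * \<beta> (m - i) * (\<Sum>h\<in>C. ?X i h * ?X (m - i) (inv h \<otimes> g)) = \<alpha> i * \<beta> (m - i) * ?X m g"
          using True by (simp add: gconv_in)
      qed
      finally show "(\<Sum>h\<in>C. \<Sum>i\<le>m. (\<alpha> i * ?X i h) * (\<beta> (m - i) * ?X (m - i) (inv h \<otimes> g)))
          = (\<Sum>i\<le>m. \<alpha> i * \<beta> (m - i)) * ?X m g" by (simp add: sum_distrib_right)
    qed
    finally show ?thesis .
  qed
qed

lemma gpow_series:
  assumes x: "x \<in> gsimplex G" and q: "prob q"
  shows "gpow G (\<lambda>g. \<Sum>m. q m * gpow G x m g) k = (\<lambda>g. \<Sum>m. cpow q k m * gpow G x m g)"
proof (induction k)
  case 0
  show ?case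
  proof
    fix g
    have "(\<Sum>m. cpow q 0 m * gpow G x m g) = (\<Sum>m. if m = 0 then gpow G x m g else 0)"
      by (intro suminf_cong) simp
    also have "\<dots> = gunit G g" using sums_single[of 0 "\<lambda>m. gpow G x m g"] sums_unique by fastforce
    finally show "gpow G (\<lambda>g. \<Sum>m. q m * gpow G x m g) 0 g = (\<Sum>m. cpow q 0 m * gpow G x m g)" by simp
  qed
next
  case (Suc k)
  then show ?case using gconv_series[OF x q prob_cpow[OF q, of k]] by simp
qed

lemma pmap_series:
  assumes x: "x \<in> gsimplex G" and q: "prob q" and a: "prob a"
  shows "pmap G a (\<lambda>g. \<Sum>m. q m * gpow G x m g) = (\<lambda>g. \<Sum>m. (\<Sum>k. a k * cpow q k m) * gpow G x m g)"
proof
  fix g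
  have c: "\<And>k. cpow q k sums 1" "\<And>k m. 0 \<le> cpow q k m"
    using prob_cpow[OF q] by (auto simp: prob_def)
  have Xb: "norm (gpow G x m g) \<le> 1" for m
    using gsimplex_bounds[OF gpow_gsimplex[OF x]] by (simp add: abs_le_iff)
  show "pmap G a (\<lambda>g. \<Sum>m. q m * gpow G x m g) g = (\<Sum>m. (\<Sum>k. a k * cpow q k m) * gpow G x m g)"
    unfolding pmap_def gpow_series[OF x q]
    using swap_sum(2)[where V="\<lambda>m. gpow G x m g", OF prob_nonneg[OF a] prob_summable[OF a] c(2) c(1) Xb]
    by (simp add: sums_unique[symmetric])
qed

lemma iter_series:
  assumes x: "x \<in> gsimplex G" and a: "prob a"
  shows "(pmap G a ^^ n) x = (\<lambda>g. \<Sum>m. qn a n m * gpow G x m g)"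
proof (induction n)
  case 0
  show ?case
  proof
    fix g
    have "(\<Sum>m. qn a 0 m * gpow G x m g) = (\<Sum>m. if m = 1 then gpow G x m g else 0)"
      by (intro suminf_cong) simp
    also have "\<dots> = gpow G x 1 g" using sums_single[of 1 "\<lambda>m. gpow G x m g"] sums_unique by fastforce
    also have "\<dots> = x g" using x gpow_1 by (simp add: gsimplex_iff)
    finally show "(pmap G a ^^ 0) x g = (\<Sum>m. qn a 0 m * gpow G x m g)" by simp
  qed
next
  case (Suc n)
  then show ?case using pmap_series[OF x prob_qn[OF a] a] by simp
qed

end

locale gw =
  fixes a :: "nat \<Rightarrow> real"
  assumes a_prob: "prob a" and a_lt1: "\<And>k. a k < 1"
begin

abbreviation f :: "real \<Rightarrow> real" where "f \<equiv> fS a"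

lemma a0: "0 \<le> a k" using a_prob by (simp add: prob_nonneg)
lemma asumm: "summable a" using a_prob by (rule prob_summable)
lemma asum1: "suminf a = 1" using a_prob by (rule prob_suminf)

lemma f_eq: "f t = (\<Sum>k. a k * t ^ k)" by (simp add: fS_def)

lemma summ_f: "\<bar>t\<bar> \<le> 1 \<Longrightarrow> summable (\<lambda>k. a k * t ^ k)"
  by (rule summable_comparison_test[OF _ asumm])
     (auto intro!: exI[of _ 0] mult_left_le simp: abs_mult a0 power_abs power_le_one)

lemma f_mono: "0 \<le> s \<Longrightarrow> s \<le> t \<Longrightarrow> t \<le> 1 \<Longrightarrow> f s \<le> f t"
  unfolding f_eq by (intro suminf_le summ_f) (auto intro!: mult_left_mono power_mono simp: a0)

lemma f_1: "f 1 = 1" using asum1 by (simp add: f_eq)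

lemma f_nonneg: "0 \<le> t \<Longrightarrow> t \<le> 1 \<Longrightarrow> 0 \<le> f t"
  unfolding f_eq by (intro suminf_nonneg summ_f) (auto simp: a0)

lemma f_le1: "0 \<le> t \<Longrightarrow> t \<le> 1 \<Longrightarrow> f t \<le> 1"
  using f_mono[of t 1] f_1 by simp

lemma F_range: "0 \<le> t \<Longrightarrow> t \<le> 1 \<Longrightarrow> 0 \<le> (f ^^ n) t \<and> (f ^^ n) t \<le> 1"
  by (induction n) (auto simp: f_nonneg f_le1)

lemma F_mono: "0 \<le> s \<Longrightarrow> s \<le> t \<Longrightarrow> t \<le> 1 \<Longrightarrow> (f ^^ n) s \<le> (f ^^ n) t"
  by (induction n) (auto intro!: f_mono simp: F_range)

lemma F_fix: "f t = t \<Longrightarrow> (f ^^ n) t = t"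
  by (induction n) auto

lemma f_cont: "\<bar>t\<bar> < 1 \<Longrightarrow> isCont f t"
proof -
  assume t: "\<bar>t\<bar> < 1"
  have "isCont (\<lambda>x. \<Sum>n. a n * x ^ n) t"
    by (rule isCont_powser[where K=1]) (use asumm t in auto)
  moreover have "f = (\<lambda>x. \<Sum>n. a n * x ^ n)" by (rule ext) (simp add: f_eq)
  ultimately show ?thesis by simp
qed

definition "u n = (f ^^ n) 0"

lemma u_inc: "incseq u"
proof (rule incseq_SucI)
  fix n
  have "(f ^^ n) 0 \<le> (f ^^ n) (f 0)" by (rule F_mono) (auto simp: f_nonneg f_le1)
  then show "u n \<le> u (Suc n)" by (simp add: u_def funpow_Suc_right del: funpow.simps)
qed

lemma u_range: "0 \<le> u n" "u n \<le> 1" using F_range[of 0 n] by (auto simp: u_def)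

definition "qinf = lim u"

lemma u_lim: "u \<longlonglongrightarrow> qinf"
proof -
  obtain L where "u \<longlonglongrightarrow> L" using incseq_convergent[OF u_inc, of 1] u_range by blast
  then show ?thesis by (simp add: qinf_def limI)
qed

lemma qinf_range: "0 \<le> qinf" "qinf \<le> 1"
  using LIMSEQ_le_const[OF u_lim, of 0] LIMSEQ_le_const2[OF u_lim, of 1] u_range by auto

lemma u_le_qinf: "u n \<le> qinf" using incseq_le[OF u_inc u_lim] by simp

lemma qinf_fix: "qinf < 1 \<Longrightarrow> f qinf = qinf"
proof -
  assume q: "qinf < 1"
  have "(\<lambda>n. f (u n)) \<longlonglongrightarrow> f qinf"
    using f_cont[of qinf] q qinf_range u_lim by (intro isCont_tendsto_compose[where g=f]) auto
  moreover have "(\<lambda>n. f (u n)) = (\<lambda>n. u (Suc n))" by (simp add: u_def)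
  moreover have "(\<lambda>n. u (Suc n)) \<longlonglongrightarrow> qinf" using u_lim by (rule LIMSEQ_Suc)
  ultimately show ?thesis using LIMSEQ_unique by metis
qed

lemma qinf_le_fix: "0 \<le> t \<Longrightarrow> t \<le> 1 \<Longrightarrow> f t = t \<Longrightarrow> qinf \<le> t"
proof -
  assume t: "0 \<le> t" "t \<le> 1" "f t = t"
  have "u n \<le> t" for n using F_mono[of 0 t n] F_fix[of t n] t by (simp add: u_def)
  then show ?thesis using LIMSEQ_le_const2[OF u_lim] by blast
qed

definition psi :: "nat \<Rightarrow> real \<Rightarrow> real" where
  "psi k t = (if k = 0 then 1 else - (\<Sum>i\<in>{1..<k}. t ^ i))"

lemma psi_eq: "(1 - t) * psi k t = t ^ k - t"
proof (cases "k = 0")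
  case True then show ?thesis by (simp add: psi_def)
next
  case False
  then obtain j where k: "k = Suc j" using not0_implies_Suc by blast
  have "(1 - t) * (\<Sum>i\<in>{1..<Suc j}. t ^ i) = t - t ^ Suc j"
  proof (induction j)
    case (Suc j)
    have "(\<Sum>i\<in>{1..<Suc (Suc j)}. t ^ i) = (\<Sum>i\<in>{1..<Suc j}. t ^ i) + t ^ Suc j"
      by (simp add: sum.atLeastLessThan_Suc)
    then have e1: "(1 - t) * (\<Sum>i\<in>{1..<Suc (Suc j)}. t ^ i) = (t - t ^ Suc j) + (1 - t) * t ^ Suc j"
      using Suc by (simp only: distrib_left)
    have e2: "(t - t ^ Suc j) + (1 - t) * t ^ Suc j = t - t ^ Suc (Suc j)" by (simp add: algebra_simps)
    show ?case using e1 e2 by linarith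
  qed simp
  then show ?thesis using k by (simp add: psi_def algebra_simps)
qed

lemma psi_bound: assumes "0 \<le> t" "t < 1" shows "\<bar>psi k t\<bar> \<le> 1 / (1 - t)"
proof -
  have "\<bar>t ^ k - t\<bar> \<le> 1" using assms by (smt (verit) power_le_one zero_le_power)
  then have "\<bar>(1 - t) * psi k t\<bar> \<le> 1" by (simp add: psi_eq)
  then show ?thesis using assms by (simp add: abs_mult field_simps)
qed

lemma psi_anti: "0 \<le> s \<Longrightarrow> s \<le> t \<Longrightarrow> psi k t \<le> psi k s"
  unfolding psi_def by (auto intro!: sum_mono power_mono)

lemma psi_strict: assumes "0 \<le> s" "s < t" "2 \<le> k" shows "psi k t < psi k s"
proof -
  have "(\<Sum>i\<in>{1..<k}. s ^ i) < (\<Sum>i\<in>{1..<k}. t ^ i)"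
    by (rule sum_strict_mono_ex1) (use assms in \<open>auto intro!: power_mono bexI[of _ 1]\<close>)
  then show ?thesis using assms by (simp add: psi_def)
qed

definition "H t = (\<Sum>k. a k * psi k t)"

lemma summ_H: assumes "0 \<le> t" "t < 1" shows "summable (\<lambda>k. a k * psi k t)"
proof (rule summable_comparison_test[OF _ summable_mult2[OF asumm, of "1 / (1 - t)"]])
  show "\<exists>N. \<forall>n\<ge>N. norm (a n * psi n t) \<le> a n * (1 / (1 - t))"
  proof (intro exI[of _ 0] allI impI)
    fix n :: nat
    have "a n * \<bar>psi n t\<bar> \<le> a n * (1 / (1 - t))" by (rule mult_left_mono[OF psi_bound[OF assms] a0])
    then show "norm (a n * psi n t) \<le> a n * (1 / (1 - t))" using a0[of n] by (simp add: abs_mult)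
  qed
qed

lemma f_minus: assumes "0 \<le> t" "t < 1" shows "f t - t = (1 - t) * H t"
proof -
  have s1: "summable (\<lambda>k. a k * t ^ k)" using assms by (intro summ_f) auto
  have "f t - t = (\<Sum>k. a k * t ^ k) - (\<Sum>k. a k * t)"
    using asum1 suminf_mult2[OF asumm, of t] by (simp add: f_eq)
  also have "\<dots> = (\<Sum>k. a k * t ^ k - a k * t)"
    by (rule suminf_diff[OF s1 summable_mult2[OF asumm]])
  also have "\<dots> = (\<Sum>k. (1 - t) * (a k * psi k t))"
  proof (intro suminf_cong)
    fix k
    have "(1 - t) * (a k * psi k t) = a k * ((1 - t) * psi k t)" by (simp add: mult_ac)
    also have "\<dots> = a k * t ^ k - a k * t" by (simp add: psi_eq right_diff_distrib)
    finally show "a k * t ^ k - a k * t = (1 - t) * (a k * psi k t)" by simp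
  qed
  also have "\<dots> = (1 - t) * H t" unfolding H_def by (rule suminf_mult[OF summ_H[OF assms]])
  finally show ?thesis .
qed

lemma below_diag:
  assumes q: "qinf < 1" and t: "qinf < t" "t < 1"
  shows "f t < t"
proof -
  have Hq: "H qinf = 0" using f_minus[of qinf] qinf_fix[OF q] qinf_range q by simp
  show ?thesis
  proof (cases "\<exists>k\<ge>2. 0 < a k")
    case True
    then obtain k0 where k0: "2 \<le> k0" "0 < a k0" by blast
    have "0 < (\<Sum>k. a k * psi k qinf - a k * psi k t)"
    proof (rule suminf_pos2)
      show "summable (\<lambda>k. a k * psi k qinf - a k * psi k t)"
        using summ_H[of qinf] summ_H[of t] qinf_range q t by (intro summable_diff) auto
      show "0 \<le> a k * psi k qinf - a k * psi k t" for k
        using psi_anti[of qinf t k] a0[of k] qinf_range t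
        by (simp add: right_diff_distrib[symmetric] mult_nonneg_nonneg)
      show "0 < a k0 * psi k0 qinf - a k0 * psi k0 t"
        using psi_strict[of qinf t k0] k0 qinf_range t
        by (simp add: right_diff_distrib[symmetric])
    qed
    also have "\<dots> = H qinf - H t"
      unfolding H_def using summ_H[of qinf] summ_H[of t] qinf_range q t by (intro suminf_diff[symmetric]) auto
    finally have "H t < 0" using Hq by simp
    moreover have "0 < 1 - t" using t by simp
    ultimately have "(1 - t) * H t < 0" by (simp add: mult_pos_neg)
    then show ?thesis using f_minus[of t] t qinf_range by simp
  next
    case False
    then have z: "a k = 0" if "k \<notin> {0,1}" for k proof -
      have "2 \<le> k" using that by auto
      then show ?thesis using that a0[of k] False by force
    qed
    have "suminf a = (\<Sum>n\<in>{0,1}. a n)" by (rule suminf_finite) (use z in auto)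
    then have "suminf a = a 0 + a 1" by simp
    then have "0 < a 0" using asum1 a_lt1[of 1] by simp
    have "H qinf = (\<Sum>n\<in>{0,1}. a n * psi n qinf)"
      unfolding H_def by (rule suminf_finite) (use z in auto)
    then have "H qinf = a 0" by (simp add: psi_def)
    then show ?thesis using Hq \<open>0 < a 0\<close> by simp
  qed
qed

lemma F_lim: assumes r: "0 \<le> r" "r < 1" shows "(\<lambda>n. (f ^^ n) r) \<longlonglongrightarrow> qinf"
proof (cases "r \<le> qinf")
  case True
  have fq: "(f ^^ n) qinf = qinf" for n
  proof (cases "qinf < 1")
    case True then show ?thesis using qinf_fix F_fix by blast
  next
    case False then have "qinf = 1" using qinf_range by simp
    then show ?thesis using F_fix f_1 by simp
  qed
  show ?thesis
  proof (rule tendsto_sandwich[OF _ _ u_lim tendsto_const])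
    show "\<forall>\<^sub>F n in sequentially. u n \<le> (f ^^ n) r"
      using F_mono[of 0 r] r by (auto simp: u_def)
    show "\<forall>\<^sub>F n in sequentially. (f ^^ n) r \<le> qinf"
      using F_mono[of r qinf] fq r True qinf_range by auto
  qed
next
  case False
  then have q: "qinf < 1" "qinf < r" using r by auto
  define v where "v n = (f ^^ n) r" for n
  have lb: "qinf \<le> v n" for n
    using F_mono[of qinf r n] F_fix[OF qinf_fix[OF q(1)], of n] q qinf_range r by (simp add: v_def)
  have ub: "v n \<le> r" for n
  proof (induction n)
    case 0 then show ?case by (simp add: v_def)
  next
    case (Suc n)
    have "v (Suc n) = f (v n)" by (simp add: v_def)
    also have "\<dots> \<le> v n"
    proof (cases "v n = qinf")
      case True then show ?thesis using qinf_fix[OF q(1)] by simp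
    next
      case False then show ?thesis using below_diag[OF q(1), of "v n"] lb[of n] Suc r by simp
    qed
    finally show ?case using Suc by simp
  qed
  have dec: "decseq v"
  proof (rule decseq_SucI)
    fix n
    show "v (Suc n) \<le> v n"
    proof (cases "v n = qinf")
      case True then show ?thesis using qinf_fix[OF q(1)] by (simp add: v_def)
    next
      case False then show ?thesis using below_diag[OF q(1), of "v n"] lb[of n] ub[of n] r by (simp add: v_def)
    qed
  qed
  obtain L where L: "v \<longlonglongrightarrow> L" "\<And>i. L \<le> v i" using decseq_convergent[OF dec, of qinf] lb by blast
  have Lr: "qinf \<le> L" "L \<le> r"
    using LIMSEQ_le_const[OF L(1), of qinf] LIMSEQ_le_const2[OF L(1), of r] lb ub by auto
  have "(\<lambda>n. f (v n)) \<longlonglongrightarrow> f L"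
    using f_cont[of L] Lr qinf_range r L(1) by (intro isCont_tendsto_compose[where g=f]) auto
  moreover have "(\<lambda>n. f (v n)) \<longlonglongrightarrow> L"
    using LIMSEQ_Suc[OF L(1)] by (simp add: v_def)
  ultimately have "f L = L" using LIMSEQ_unique by metis
  then have "L = qinf" using below_diag[OF q(1), of L] Lr r by (cases "qinf < L") auto
  moreover have "v = (\<lambda>n. (f ^^ n) r)" by (rule ext) (simp add: v_def)
  ultimately show ?thesis using L(1) by simp
qed

end

definition RC :: "(nat \<Rightarrow> 'b::real_normed_vector) \<Rightarrow> bool" where
  "RC s \<longleftrightarrow> (\<exists>P>0. \<forall>\<rho>. convergent (\<lambda>j. s (j * P + \<rho>)))"

lemma RC_multP:
  assumes "\<forall>\<rho>. convergent (\<lambda>j. s (j * P + \<rho>))" "k > 0"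
  shows "\<forall>\<rho>. convergent (\<lambda>j. s (j * (P * k) + \<rho>))"
proof
  fix \<rho>
  have "strict_mono (\<lambda>j::nat. j * k)" using assms(2) by (auto intro!: strict_monoI)
  from convergent_subseq_convergent[OF assms(1)[rule_format, of \<rho>] this]
  show "convergent (\<lambda>j. s (j * (P * k) + \<rho>))" by (simp add: o_def mult_ac)
qed

lemma RC_conv: "convergent s \<Longrightarrow> RC s"
  unfolding RC_def by (auto intro!: exI[of _ 1] simp: convergent_ignore_initial_segment)

lemma RC_binop:
  assumes "RC s" "RC t"
    and op: "\<And>X Y. convergent X \<Longrightarrow> convergent Y \<Longrightarrow> convergent (\<lambda>n. h (X n) (Y n))"
  shows "RC (\<lambda>n. h (s n) (t n))"
proof -
  obtain P where P: "P > 0" "\<forall>\<rho>. convergent (\<lambda>j. s (j * P + \<rho>))" using assms(1) by (auto simp: RC_def)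
  obtain Q where Q: "Q > 0" "\<forall>\<rho>. convergent (\<lambda>j. t (j * Q + \<rho>))" using assms(2) by (auto simp: RC_def)
  have 1: "\<forall>\<rho>. convergent (\<lambda>j. s (j * (P * Q) + \<rho>))" by (rule RC_multP[OF P(2) Q(1)])
  have 2: "\<forall>\<rho>. convergent (\<lambda>j. t (j * (Q * P) + \<rho>))" by (rule RC_multP[OF Q(2) P(1)])
  show ?thesis unfolding RC_def
    using P Q 1 2 by (intro exI[of _ "P * Q"]) (auto simp: mult.commute intro!: op)
qed

lemma RC_add: "RC s \<Longrightarrow> RC t \<Longrightarrow> RC (\<lambda>n. s n + t n)"
  by (rule RC_binop) (auto simp: convergent_add)

lemma RC_const: "RC (\<lambda>n. c)" by (rule RC_conv) (simp add: convergent_const)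

lemma RC_mult: fixes s t :: "nat \<Rightarrow> 'b::real_normed_algebra"
  shows "RC s \<Longrightarrow> RC t \<Longrightarrow> RC (\<lambda>n. s n * t n)"
  by (rule RC_binop) (auto simp: convergent_def intro: tendsto_mult)

lemma RC_sum: "finite I \<Longrightarrow> (\<And>i. i \<in> I \<Longrightarrow> RC (s i)) \<Longrightarrow> RC (\<lambda>n. \<Sum>i\<in>I. s i n)"
  by (induction I rule: finite_induct) (auto intro!: RC_add RC_const)

lemma RC_Re: assumes "RC s" shows "RC (\<lambda>n. Re (s n))"
proof -
  obtain P where P: "P > 0" "\<forall>\<rho>. convergent (\<lambda>j. s (j * P + \<rho>))" using assms by (auto simp: RC_def)
  have "convergent (\<lambda>j. Re (s (j * P + \<rho>)))" for \<rho>
    using P(2) unfolding convergent_def by (metis tendsto_Re)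
  then show ?thesis using P(1) by (auto simp: RC_def)
qed

lemma RC_shift: assumes "RC (\<lambda>n. s (n + N))" shows "RC s"
proof -
  obtain P where P: "P > 0" "\<forall>\<rho>. convergent (\<lambda>j. s (j * P + \<rho> + N))" using assms by (auto simp: RC_def)
  have "convergent (\<lambda>j. s (j * P + \<rho>))" for \<rho>
  proof -
    have "convergent (\<lambda>j. s (j * P + (\<rho> + P * N - N) + N))" using P by blast
    moreover have "j * P + (\<rho> + P * N - N) + N = (j + N) * P + \<rho>" for j
    proof -
      have h: "N \<le> P * N" using P(1) by simp
      have "j * P + (\<rho> + M - N) + N = j * P + M + \<rho>" if "N \<le> M" for M using that by arith
      from this[OF h] show ?thesis by (simp add: algebra_simps)
    qed
    ultimately have "convergent (\<lambda>j. s ((j + N) * P + \<rho>))" by simp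
    then show ?thesis using convergent_ignore_initial_segment[of "\<lambda>j. s (j * P + \<rho>)" N] by simp
  qed
  then show ?thesis using P by (auto simp: RC_def)
qed

lemma RC_periodic:
  assumes P: "P > 0" and per: "\<And>n. n \<ge> N \<Longrightarrow> s (n + P) = s n"
  shows "RC s"
proof -
  have "convergent (\<lambda>j. s (j * P + \<rho>))" for \<rho>
  proof -
    have "s ((j + N) * P + \<rho>) = s (N * P + \<rho>)" for j
    proof (induction j)
      case (Suc j)
      have "N \<le> N * P" using P by simp
      moreover have "N * P \<le> (j + N) * P" by simp
      ultimately have "N \<le> (j + N) * P" by (rule order.trans)
      then have "N \<le> (j + N) * P + \<rho>" by simp
      then have "s ((j + N) * P + \<rho> + P) = s ((j + N) * P + \<rho>)" by (rule per)
      then show ?case using Suc by (simp add: algebra_simps)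
    qed simp
    then have "convergent (\<lambda>j. s ((j + N) * P + \<rho>))" by (simp add: convergent_const)
    then show ?thesis using convergent_ignore_initial_segment[of "\<lambda>j. s (j * P + \<rho>)" N] by simp
  qed
  then show ?thesis using P by (auto simp: RC_def)
qed

lemma cesaro_null:
  fixes e :: "nat \<Rightarrow> real"
  assumes "e \<longlonglongrightarrow> 0"
  shows "(\<lambda>n. (\<Sum>i<n. e i) / real n) \<longlonglongrightarrow> 0"
proof (rule LIMSEQ_I)
  fix \<epsilon> :: real assume \<epsilon>: "0 < \<epsilon>"
  obtain N0 where N0: "\<And>i. i \<ge> N0 \<Longrightarrow> \<bar>e i\<bar> < \<epsilon> / 2"
    using LIMSEQ_D[OF assms, of "\<epsilon> / 2"] \<epsilon> by auto
  define M where "M = (\<Sum>i<N0. \<bar>e i\<bar>)"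
  have M0: "0 \<le> M" by (simp add: M_def sum_nonneg)
  define N where "N = max (N0 + 1) (nat \<lceil>2 * M / \<epsilon>\<rceil> + 1)"
  show "\<exists>N. \<forall>n\<ge>N. norm ((\<Sum>i<n. e i) / real n - 0) < \<epsilon>"
  proof (intro exI[of _ N] allI impI)
    fix n assume n: "N \<le> n"
    then have nN0: "N0 \<le> n" and npos: "0 < n" by (auto simp: N_def)
    have nM: "2 * M / \<epsilon> < real n"
      using n by (simp add: N_def) linarith
    have "\<bar>\<Sum>i<n. e i\<bar> \<le> (\<Sum>i<n. \<bar>e i\<bar>)" by (rule sum_abs)
    also have "\<dots> = M + (\<Sum>i\<in>{N0..<n}. \<bar>e i\<bar>)"
      unfolding M_def using nN0 by (metis lessThan_atLeast0 sum.atLeastLessThan_concat zero_le)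
    also have "(\<Sum>i\<in>{N0..<n}. \<bar>e i\<bar>) \<le> (\<Sum>i\<in>{N0..<n}. \<epsilon> / 2)"
    proof (intro sum_mono)
      fix i assume "i \<in> {N0..<n}"
      then have "\<bar>e i\<bar> < \<epsilon> / 2" by (intro N0) auto
      then show "\<bar>e i\<bar> \<le> \<epsilon> / 2" by simp
    qed
    also have "\<dots> \<le> real n * (\<epsilon> / 2)" using \<epsilon> nN0 by (simp add: mult_right_mono)
    finally have "\<bar>\<Sum>i<n. e i\<bar> \<le> M + real n * (\<epsilon> / 2)" by simp
    moreover have "M < real n * (\<epsilon> / 2)" using nM \<epsilon> by (simp add: field_simps)
    ultimately have "\<bar>\<Sum>i<n. e i\<bar> < real n * \<epsilon>" by simp
    then show "norm ((\<Sum>i<n. e i) / real n - 0) < \<epsilon>"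
      using npos by (simp add: field_simps)
  qed
qed

lemma modinj: assumes "(n + i) mod P = (n + j) mod P" "i < P" "j < P" shows "i = (j::nat)"
proof -
  have *: "i = j" if "i \<le> j" "(n + i) mod P = (n + j) mod P" "j < P" for i j
  proof -
    have "P dvd (n + j) - (n + i)" using mod_eq_dvd_iff_nat[of "n + i" "n + j" P] that by simp
    then have "P dvd j - i" by simp
    then show ?thesis using that nat_dvd_not_less[of "j - i" P] by (cases "j - i = 0") auto
  qed
  show ?thesis using *[of i j] *[of j i] assms by (cases "i \<le> j") auto
qed

lemma period_sum:
  fixes L :: "nat \<Rightarrow> real"
  assumes P: "P > 0"
  shows "(\<Sum>i\<in>{n..<n + P}. L (i mod P)) = (\<Sum>\<rho><P. L \<rho>)"
proof -
  have inj: "inj_on (\<lambda>i. (n + i) mod P) {..<P}"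
  proof (rule inj_onI)
    fix i j assume ij: "i \<in> {..<P}" "j \<in> {..<P}" "(n + i) mod P = (n + j) mod P"
    then show "i = j" using ij by (intro modinj[of n i P j]) auto
  qed
  have im: "(\<lambda>i. (n + i) mod P) ` {..<P} = {..<P}"
    by (rule endo_inj_surj[OF _ _ inj]) (use P in auto)
  have "(\<Sum>i\<in>{n..<n + P}. L (i mod P)) = (\<Sum>i<P. L ((n + i) mod P))"
    by (rule sum.reindex_bij_witness[where i="\<lambda>i. i + n" and j="\<lambda>i. i - n"]) auto
  also have "\<dots> = (\<Sum>\<rho>\<in>(\<lambda>i. (n + i) mod P) ` {..<P}. L \<rho>)"
    by (simp add: sum.reindex[OF inj])
  finally show ?thesis using im by simp
qed

lemma cesaro_periodic:
  fixes L :: "nat \<Rightarrow> real"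
  assumes P: "P > 0"
  shows "(\<lambda>n. (\<Sum>i<n. L (i mod P)) / real n) \<longlonglongrightarrow> (\<Sum>\<rho><P. L \<rho>) / real P"
proof -
  define \<Lambda> where "\<Lambda> = (\<Sum>\<rho><P. L \<rho>)"
  define S where "S n = (\<Sum>i<n. L (i mod P))" for n
  have S_step: "S (n + P) = S n + \<Lambda>" for n
  proof -
    have "S (n + P) = S n + (\<Sum>i\<in>{n..<n + P}. L (i mod P))"
      unfolding S_def by (metis add.commute lessThan_atLeast0 sum.atLeastLessThan_concat le_add2 zero_le)
    then show ?thesis using period_sum[OF P, where n=n and L=L] by (simp add: \<Lambda>_def)
  qed
  have S_k: "S (k * P + r) = real k * \<Lambda> + S r" for k r
  proof (induction k)
    case (Suc k)
    have "S (Suc k * P + r) = S ((k * P + r) + P)" by (simp add: algebra_simps)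
    also have "\<dots> = S (k * P + r) + \<Lambda>" by (rule S_step)
    finally show ?case using Suc by (simp add: algebra_simps)
  qed simp
  define B where "B = (\<Sum>\<rho><P. \<bar>L \<rho>\<bar>) + \<bar>\<Lambda>\<bar>"
  have bnd: "\<bar>S n - real n / real P * \<Lambda>\<bar> \<le> B" for n
  proof -
    define k r where "k = n div P" and "r = n mod P"
    have n: "n = k * P + r" by (simp add: k_def r_def)
    have r: "r < P" using P by (simp add: r_def)
    have Sn: "S n = real k * \<Lambda> + S r" using S_k n by simp
    have "real n = real k * real P + real r" using n by simp
    then have "S n - real n / real P * \<Lambda> = S r - real r / real P * \<Lambda>"
      using P Sn by (simp add: field_simps)
    moreover have "\<bar>S r\<bar> \<le> (\<Sum>\<rho><P. \<bar>L \<rho>\<bar>)"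
    proof -
      have "\<bar>S r\<bar> \<le> (\<Sum>i<r. \<bar>L (i mod P)\<bar>)" unfolding S_def by (rule sum_abs)
      also have "\<dots> = (\<Sum>i<r. \<bar>L i\<bar>)" using r by (intro sum.cong) auto
      also have "\<dots> \<le> (\<Sum>\<rho><P. \<bar>L \<rho>\<bar>)" using r by (intro sum_mono2) auto
      finally show ?thesis .
    qed
    moreover have "\<bar>real r / real P * \<Lambda>\<bar> \<le> \<bar>\<Lambda>\<bar>"
    proof -
      have "real r / real P \<le> 1" using r by simp
      then have "real r / real P * \<bar>\<Lambda>\<bar> \<le> 1 * \<bar>\<Lambda>\<bar>" by (intro mult_right_mono) auto
      then show ?thesis by (simp add: abs_mult)
    qed
    ultimately show ?thesis unfolding B_def by (smt (verit))
  qed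
  have "(\<lambda>n. (S n - real n / real P * \<Lambda>) / real n) \<longlonglongrightarrow> 0"
  proof (rule Lim_null_comparison[OF _ tendsto_divide_0[OF tendsto_const[of B] filterlim_at_top_imp_at_infinity[OF filterlim_real_sequentially]]])
    show "\<forall>\<^sub>F n in sequentially. norm ((S n - real n / real P * \<Lambda>) / real n) \<le> B / real n"
      using bnd by (auto intro!: always_eventually divide_right_mono)
  qed
  moreover have "\<forall>\<^sub>F n in sequentially. (S n - real n / real P * \<Lambda>) / real n = S n / real n - \<Lambda> / real P"
    using eventually_gt_at_top[of 0] by eventually_elim (simp add: field_simps)
  ultimately have "(\<lambda>n. S n / real n - \<Lambda> / real P) \<longlonglongrightarrow> 0"
    using Lim_transform_eventually by fastforce
  then have "(\<lambda>n. S n / real n - \<Lambda> / real P + \<Lambda> / real P) \<longlonglongrightarrow> 0 + \<Lambda> / real P"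
    by (intro tendsto_add tendsto_const)
  then show ?thesis by (simp add: S_def \<Lambda>_def)
qed

lemma RC_cesaro0:
  fixes s :: "nat \<Rightarrow> real"
  assumes "RC s"
  shows "convergent (\<lambda>n. (\<Sum>i<n. s i) / real n)"
proof -
  obtain P where P: "P > 0" "\<forall>\<rho>. convergent (\<lambda>j. s (j * P + \<rho>))" using assms by (auto simp: RC_def)
  define L where "L \<rho> = lim (\<lambda>j. s (j * P + \<rho>))" for \<rho>
  have L: "(\<lambda>j. s (j * P + \<rho>)) \<longlonglongrightarrow> L \<rho>" for \<rho> using P(2) by (simp add: L_def convergent_LIMSEQ_iff)
  define e where "e i = s i - L (i mod P)" for i
  have e: "e \<longlonglongrightarrow> 0"
  proof (rule LIMSEQ_I)
    fix \<epsilon> :: real assume \<epsilon>: "0 < \<epsilon>"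
    have "\<forall>\<rho>\<in>{..<P}. \<forall>\<^sub>F j in sequentially. \<bar>s (j * P + \<rho>) - L \<rho>\<bar> < \<epsilon>"
    proof
      fix \<rho>
      obtain N where "\<forall>n\<ge>N. norm (s (n * P + \<rho>) - L \<rho>) < \<epsilon>" using LIMSEQ_D[OF L \<epsilon>] by blast
      then show "\<forall>\<^sub>F j in sequentially. \<bar>s (j * P + \<rho>) - L \<rho>\<bar> < \<epsilon>"
        by (auto simp: eventually_sequentially)
    qed
    then have "\<forall>\<^sub>F j in sequentially. \<forall>\<rho>\<in>{..<P}. \<bar>s (j * P + \<rho>) - L \<rho>\<bar> < \<epsilon>"
      by (rule eventually_ball_finite[OF finite_lessThan])
    then obtain J where J: "\<And>j \<rho>. j \<ge> J \<Longrightarrow> \<rho> < P \<Longrightarrow> \<bar>s (j * P + \<rho>) - L \<rho>\<bar> < \<epsilon>"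
      by (auto simp: eventually_sequentially)
    show "\<exists>N. \<forall>n\<ge>N. norm (e n - 0) < \<epsilon>"
    proof (intro exI[of _ "J * P"] allI impI)
      fix n assume n: "J * P \<le> n"
      have "J \<le> n div P" using n P by (metis div_le_mono div_mult_self_is_m)
      moreover have "n mod P < P" using P by simp
      ultimately have "\<bar>s ((n div P) * P + n mod P) - L (n mod P)\<bar> < \<epsilon>" by (rule J)
      then show "norm (e n - 0) < \<epsilon>" by (simp add: e_def)
    qed
  qed
  have "(\<lambda>n. (\<Sum>i<n. e i) / real n + (\<Sum>i<n. L (i mod P)) / real n) \<longlonglongrightarrow> 0 + (\<Sum>\<rho><P. L \<rho>) / real P"
    by (intro tendsto_add cesaro_null[OF e] cesaro_periodic[OF P(1)])
  moreover have "(\<Sum>i<n. e i) / real n + (\<Sum>i<n. L (i mod P)) / real n = (\<Sum>i<n. s i) / real n" for n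
    by (simp add: e_def sum_subtractf add_divide_distrib[symmetric])
  ultimately show ?thesis by (auto simp: convergent_def)
qed

lemma RC_cesaro:
  fixes s :: "nat \<Rightarrow> real"
  assumes "RC s"
  shows "convergent (\<lambda>n. (1 / real n) * (\<Sum>i=1..n. s i))"
proof -
  obtain P where P: "P > 0" "\<forall>\<rho>. convergent (\<lambda>j. s (j * P + \<rho>))" using assms by (auto simp: RC_def)
  have "convergent (\<lambda>j. s (j * P + \<rho> + 1))" for \<rho> using P(2)[rule_format, of "\<rho> + 1"] by (simp add: add.assoc)
  then have "RC (\<lambda>i. s (i + 1))" using P(1) unfolding RC_def by blast
  from RC_cesaro0[OF this] have "convergent (\<lambda>n. (\<Sum>i<n. s (i + 1)) / real n)" .
  moreover have "(\<Sum>i<n. s (i + 1)) = (\<Sum>i=1..n. s i)" for n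
    by (rule sum.reindex_bij_witness[where i="\<lambda>i. i - 1" and j="\<lambda>i. i + 1"]) auto
  ultimately show ?thesis by simp
qed

context gw begin

abbreviation fc :: "complex \<Rightarrow> complex" where "fc \<equiv> fS a"

lemma u_qn: "u n = qn a n 0"
proof -
  have "u n = (\<Sum>m. qn a n m *\<^sub>R (0::real) ^ m)" unfolding u_def by (rule F_rep[OF a_prob]) simp
  also have "\<dots> = (\<Sum>m\<in>{0}. qn a n m *\<^sub>R (0::real) ^ m)" by (rule suminf_finite) auto
  finally show ?thesis by simp
qed

lemma near:
  assumes z: "norm z \<le> 1"
  shows "norm ((fc ^^ n) z - of_real (u n)) \<le> (f ^^ n) (norm z) - u n"
proof -
  let ?q = "qn a n"
  have q: "prob ?q" by (rule prob_qn[OF a_prob])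
  have ns: "summable (\<lambda>m. norm (?q m *\<^sub>R z ^ m))"
    by (rule summable_comparison_test[OF _ prob_summable[OF q]])
       (use z prob_nonneg[OF q] in \<open>auto intro!: exI[of _ 0] mult_left_le simp: norm_power power_le_one\<close>)
  have ns': "summable (\<lambda>m. ?q m * norm z ^ m)" using ns by (simp add: norm_power prob_nonneg[OF q])
  have "(fc ^^ n) z = (\<Sum>m. ?q m *\<^sub>R z ^ m)" by (rule F_rep[OF a_prob z])
  then have "(fc ^^ n) z - of_real (u n) = (\<Sum>m. ?q (Suc m) *\<^sub>R z ^ Suc m)"
    using suminf_split_head[OF summable_norm_cancel[OF ns]] by (simp add: u_qn scaleR_conv_of_real)
  moreover have sg: "summable (\<lambda>m. norm (?q (Suc m) *\<^sub>R z ^ Suc m))"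
    using summable_ignore_initial_segment[OF ns, of 1] by simp
  ultimately have "norm ((fc ^^ n) z - of_real (u n)) \<le> (\<Sum>m. norm (?q (Suc m) *\<^sub>R z ^ Suc m))"
    using summable_norm[OF sg] by simp
  also have "\<dots> = (\<Sum>m. ?q (Suc m) * norm z ^ Suc m)"
    by (simp add: norm_power norm_mult prob_nonneg[OF q])
  also have "\<dots> = (\<Sum>m. ?q m * norm z ^ m) - ?q 0" using suminf_split_head[OF ns'] by simp
  also have "(\<Sum>m. ?q m * norm z ^ m) = (f ^^ n) (norm z)"
    using F_rep[OF a_prob, of "norm z" n] z by simp
  finally show ?thesis by (simp add: u_qn)
qed

lemma disk_lim:
  assumes z: "norm z < 1"
  shows "(\<lambda>n. (fc ^^ n) z) \<longlonglongrightarrow> of_real qinf"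
proof -
  have z1: "norm z \<le> 1" using z by simp
  have "(\<lambda>n. (f ^^ n) (norm z) - u n) \<longlonglongrightarrow> qinf - qinf"
    by (intro tendsto_diff F_lim u_lim) (use z in auto)
  then have g: "(\<lambda>n. (f ^^ n) (norm z) - u n) \<longlonglongrightarrow> 0" by simp
  have b: "\<forall>n. norm ((fc ^^ n) z - of_real (u n)) \<le> (f ^^ n) (norm z) - u n"
    using near[OF z1] by blast
  have "(\<lambda>n. (fc ^^ n) z - of_real (u n)) \<longlonglongrightarrow> 0"
    by (rule Lim_null_comparison[OF always_eventually[OF b] g])
  moreover have "(\<lambda>n. of_real (u n) :: complex) \<longlonglongrightarrow> of_real qinf" by (intro tendsto_of_real u_lim)
  ultimately have "(\<lambda>n. ((fc ^^ n) z - of_real (u n)) + of_real (u n)) \<longlonglongrightarrow> 0 + of_real qinf"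
    by (rule tendsto_add)
  then show ?thesis by simp
qed

lemma fc_norm: assumes "norm z \<le> 1" shows "norm (fc z) \<le> 1"
proof -
  have ns: "summable (\<lambda>k. norm (a k *\<^sub>R z ^ k))"
    by (rule summable_comparison_test[OF _ asumm])
       (use assms a0 in \<open>auto intro!: exI[of _ 0] mult_left_le simp: norm_power power_le_one\<close>)
  have "norm (fc z) \<le> (\<Sum>k. norm (a k *\<^sub>R z ^ k))" unfolding fS_def by (rule summable_norm[OF ns])
  also have "\<dots> \<le> (\<Sum>k. a k)"
    by (intro suminf_le ns asumm) (use assms a0 in \<open>auto intro: mult_left_le simp: norm_power power_le_one\<close>)
  finally show ?thesis using asum1 by simp
qed

lemma Fc_norm: "norm z \<le> 1 \<Longrightarrow> norm ((fc ^^ n) z) \<le> 1"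
  by (induction n) (auto intro: fc_norm)

lemma exists_pos_a: "\<exists>k. 0 < a k"
proof (rule ccontr)
  assume "\<not> ?thesis"
  then have "a k = 0" for k using a0[of k] by (meson antisym not_less)
  then have "a = (\<lambda>_. 0)" by auto
  then have "suminf a = 0" by simp
  then show False using asum1 by simp
qed

lemma unit_case:
  assumes T: "T > 0" and zT: "z ^ T = 1" and w1: "norm (fc z) = 1"
  shows "(fc z) ^ T = 1"
proof -
  define w where "w = fc z"
  have nz: "norm z = 1" using power_eq_1_iff[OF zT] T by auto
  define v where "v k = cnj w * z ^ k" for k
  have nv: "norm (v k) = 1" for k using nz w1 by (simp add: v_def w_def norm_mult norm_power)
  have ns: "summable (\<lambda>k. a k *\<^sub>R z ^ k)"
    by (rule summable_norm_cancel, rule summable_comparison_test[OF _ asumm])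
       (use nz a0 in \<open>auto simp: norm_power\<close>)
  have "(\<Sum>k. a k *\<^sub>R v k) = (\<Sum>k. cnj w * (a k *\<^sub>R z ^ k))"
    by (intro suminf_cong) (simp add: v_def)
  also have "\<dots> = cnj w * (\<Sum>k. a k *\<^sub>R z ^ k)" by (rule suminf_mult[OF ns])
  also have "\<dots> = cnj w * w" by (simp add: w_def fS_def)
  finally have "cnj w * w = (\<Sum>k. a k *\<^sub>R v k)" by simp
  moreover have "cnj w * w = 1" using w1 by (simp add: w_def complex_norm_square[symmetric] mult.commute)
  ultimately have s1: "(\<Sum>k. a k *\<^sub>R v k) = 1" by simp
  have ns2: "summable (\<lambda>k. a k *\<^sub>R v k)"
    by (rule summable_norm_cancel, rule summable_comparison_test[OF _ asumm]) (use nv a0 in auto)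
  have "Re (\<Sum>k. a k *\<^sub>R v k) = (\<Sum>k. Re (a k *\<^sub>R v k))"
    by (rule bounded_linear.suminf[OF bounded_linear_Re ns2])
  then have s2: "(\<Sum>k. a k * Re (v k)) = 1" using s1 by simp
  have sRe: "summable (\<lambda>k. a k * Re (v k))"
    using summable_Re[OF ns2] by simp
  have Re_le: "Re (v k) \<le> 1" for k using complex_Re_le_cmod[of "v k"] nv[of k] by simp
  have "(\<Sum>k. a k - a k * Re (v k)) = 0"
    using suminf_diff[OF asumm sRe] asum1 s2 by simp
  then have "\<forall>k. a k - a k * Re (v k) = 0"
    by (subst (asm) suminf_eq_zero_iff)
       (use summable_diff[OF asumm sRe] a0 Re_le in \<open>auto intro: mult_left_le\<close>)
  then have vk: "v k = 1" if "0 < a k" for k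
  proof -
    have "Re (v k) = 1" using \<open>\<forall>k. a k - a k * Re (v k) = 0\<close>[rule_format, of k] that by simp
    moreover have "(Re (v k))\<^sup>2 + (Im (v k))\<^sup>2 = 1" using nv[of k] by (simp add: cmod_def)
    ultimately have "Im (v k) = 0" by simp
    with \<open>Re (v k) = 1\<close> show ?thesis by (simp add: complex_eq_iff)
  qed
  obtain k0 where k0: "0 < a k0" using exists_pos_a by blast
  have "w * v k0 = w" using vk[OF k0] by simp
  moreover have "w * v k0 = (w * cnj w) * z ^ k0" by (simp add: v_def mult_ac)
  moreover have "w * cnj w = 1" using \<open>cnj w * w = 1\<close> by (simp add: mult.commute)
  ultimately have "z ^ k0 = w" by simp
  then have "w ^ T = (z ^ k0) ^ T" by simp
  also have "\<dots> = (z ^ T) ^ k0" by (simp add: power_mult[symmetric] mult.commute)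
  finally have "w ^ T = (z ^ T) ^ k0" .
  then show ?thesis using zT by (simp add: w_def)
qed

lemma root_RC:
  assumes T: "T > 0" and \<omega>: "\<omega> ^ T = 1"
  shows "RC (\<lambda>n. (fc ^^ n) \<omega>)"
proof (cases "\<exists>N. norm ((fc ^^ N) \<omega>) < 1")
  case True
  then obtain N where N: "norm ((fc ^^ N) \<omega>) < 1" by blast
  have eq: "(fc ^^ (n + N)) \<omega> = (fc ^^ n) ((fc ^^ N) \<omega>)" for n
    by (simp only: funpow_add o_apply)
  have "convergent (\<lambda>n. (fc ^^ n) ((fc ^^ N) \<omega>))"
    using disk_lim[OF N] unfolding convergent_def by blast
  then have "convergent (\<lambda>n. (fc ^^ (n + N)) \<omega>)" by (simp only: eq)
  then have "RC (\<lambda>n. (fc ^^ (n + N)) \<omega>)" by (rule RC_conv)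
  then show ?thesis by (rule RC_shift[of "\<lambda>n. (fc ^^ n) \<omega>" N])
next
  case False
  have n\<omega>: "norm \<omega> = 1" using power_eq_1_iff[OF \<omega>] T by auto
  have n1: "norm ((fc ^^ n) \<omega>) = 1" for n
  proof -
    have "1 \<le> norm ((fc ^^ n) \<omega>)" using False by (simp add: not_less)
    moreover have "norm ((fc ^^ n) \<omega>) \<le> 1" using Fc_norm[of \<omega> n] n\<omega> by simp
    ultimately show ?thesis by (rule antisym[rotated])
  qed
  have roots: "((fc ^^ n) \<omega>) ^ T = 1" for n
  proof (induction n)
    case (Suc n)
    have "norm (fc ((fc ^^ n) \<omega>)) = 1" using n1[of "Suc n"] by simp
    then have "(fc ((fc ^^ n) \<omega>)) ^ T = 1" by (rule unit_case[OF T Suc])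
    then show ?case by simp
  qed (use \<omega> in simp)
  define R where "R = {z::complex. z ^ T = 1}"
  have finR: "finite R" unfolding R_def by (rule finite_roots_unity) (use T in simp)
  have "\<not> inj_on (\<lambda>n. (fc ^^ n) \<omega>) {..card R}"
  proof
    assume inj: "inj_on (\<lambda>n. (fc ^^ n) \<omega>) {..card R}"
    have "(\<lambda>n. (fc ^^ n) \<omega>) ` {..card R} \<subseteq> R" using roots by (auto simp: R_def)
    from card_mono[OF finR this] card_image[OF inj] show False by simp
  qed
  then obtain i j where ij0: "i \<noteq> j" "(fc ^^ i) \<omega> = (fc ^^ j) \<omega>"
    unfolding inj_on_def by blast
  then obtain i j where ij: "i < j" "(fc ^^ i) \<omega> = (fc ^^ j) \<omega>"
    by (cases "i < j") (auto simp: not_less dest: le_neq_implies_less)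
  have per: "(fc ^^ (n + (j - i))) \<omega> = (fc ^^ n) \<omega>" if "n \<ge> i" for n
    using that
  proof (induction n rule: dec_induct)
    case base then show ?case using ij by simp
  next
    case (step n)
    have "(fc ^^ (Suc n + (j - i))) \<omega> = fc ((fc ^^ (n + (j - i))) \<omega>)" by simp
    then show ?case using step.IH by simp
  qed
  have "0 < j - i" using ij by simp
  then show ?thesis by (rule RC_periodic[of "j - i" i]) (rule per)
qed

end

definition omg :: "nat \<Rightarrow> complex" where "omg T = cis (2 * pi / real T)"

lemma omg_pow: "omg T ^ k = cis (2 * pi * real k / real T)"
  unfolding omg_def Complex.DeMoivre by (simp add: field_simps)

lemma omg_T: "T > 0 \<Longrightarrow> omg T ^ T = 1"
  by (simp add: omg_pow)

lemma omg_pow_eq1: assumes T: "T > 0" shows "omg T ^ k = 1 \<longleftrightarrow> T dvd k"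
proof
  assume "T dvd k"
  then obtain l where "k = T * l" by blast
  then show "omg T ^ k = 1" using omg_T[OF T] by (simp add: power_mult)
next
  assume h: "omg T ^ k = 1"
  have "omg T ^ k = (omg T ^ T) ^ (k div T) * omg T ^ (k mod T)"
    by (simp add: power_mult[symmetric] power_add[symmetric])
  then have "omg T ^ (k mod T) = 1" using h omg_T[OF T] by simp
  then have "cis (2 * pi * real (k mod T) / real T) = cis (2 * pi * real 0 / real T)"
    by (simp add: omg_pow)
  moreover have "inj_on (\<lambda>k. cis (2 * pi * real k / real T)) {..<T}"
    using Complex.bij_betw_roots_unity[OF T] by (simp add: bij_betw_def)
  ultimately have "k mod T = 0"
    using T by (intro inj_onD[of "\<lambda>k. cis (2 * pi * real k / real T)" "{..<T}" "k mod T" 0]) auto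
  then show "T dvd k" by auto
qed

lemma geo: assumes T: "T > 0"
  shows "(\<Sum>j<T. (omg T ^ k) ^ j) = (if T dvd k then of_nat T else 0)"
proof (cases "T dvd k")
  case True
  then have "omg T ^ k = 1" using omg_pow_eq1[OF T] by simp
  then show ?thesis using True by simp
next
  case False
  then have ne: "omg T ^ k \<noteq> 1" using omg_pow_eq1[OF T] by simp
  have "(omg T ^ k) ^ T = 1" using omg_T[OF T] by (simp add: power_mult[symmetric] mult.commute power_mult)
  then show ?thesis using False ne by (simp add: sum_gp_strict)
qed

lemma dvd_shift: assumes "\<rho> < T" shows "(T dvd (m + (T - \<rho>))) = (m mod T = (\<rho>::nat))"
proof -
  have "(m + (T - \<rho>)) mod T = (m mod T + (T - \<rho>)) mod T" by (simp add: mod_add_left_eq)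
  moreover have "m mod T < T" using assms by simp
  moreover have "(r + (T - \<rho>)) mod T = 0 \<longleftrightarrow> r = \<rho>" if "r < T" for r
  proof
    assume h: "(r + (T - \<rho>)) mod T = 0"
    have b: "0 < r + (T - \<rho>)" "r + (T - \<rho>) < 2 * T" using assms that by auto
    obtain k where k: "r + (T - \<rho>) = T * k" using h by (metis dvd_def mod_0_imp_dvd)
    have "k < 2" using b(2) k by (metis mult.commute mult_less_cancel2)
    moreover have "k \<noteq> 0" using b(1) k by auto
    ultimately have "k = 1" by linarith
    then have "r + (T - \<rho>) = T" using k by simp
    then show "r = \<rho>" using assms by simp
  qed (use assms in simp)
  ultimately show ?thesis by (simp add: dvd_eq_mod_eq_0)
qed

definition dc :: "nat \<Rightarrow> (nat \<Rightarrow> real) \<Rightarrow> nat \<Rightarrow> complex" where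
  "dc T Pr j = (1 / of_nat T) * (\<Sum>\<rho><T. of_real (Pr \<rho>) * (omg T ^ j) ^ (T - \<rho>))"

lemma dft: assumes T: "T > 0"
  shows "complex_of_real (Pr (m mod T)) = (\<Sum>j<T. dc T Pr j * (omg T ^ j) ^ m)"
proof -
  have pt: "(omg T ^ j) ^ (T - \<rho>) * (omg T ^ j) ^ m = (omg T ^ (m + (T - \<rho>))) ^ j" for j \<rho>
    by (simp add: power_add[symmetric] power_mult[symmetric] mult.commute add.commute add_mult_distrib2)
  have "(\<Sum>j<T. dc T Pr j * (omg T ^ j) ^ m)
      = (\<Sum>j<T. (1 / of_nat T) * (\<Sum>\<rho><T. of_real (Pr \<rho>) * ((omg T ^ j) ^ (T - \<rho>) * (omg T ^ j) ^ m)))"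
    unfolding dc_def by (simp add: sum_distrib_right mult.assoc)
  also have "\<dots> = (1 / of_nat T) * (\<Sum>j<T. \<Sum>\<rho><T. of_real (Pr \<rho>) * (omg T ^ (m + (T - \<rho>))) ^ j)"
    by (simp add: pt sum_distrib_left)
  also have "\<dots> = (1 / of_nat T) * (\<Sum>\<rho><T. \<Sum>j<T. of_real (Pr \<rho>) * (omg T ^ (m + (T - \<rho>))) ^ j)"
    by (subst sum.swap) (rule refl)
  also have "\<dots> = (1 / of_nat T) * (\<Sum>\<rho><T. of_real (Pr \<rho>) * (\<Sum>j<T. (omg T ^ (m + (T - \<rho>))) ^ j))"
    by (simp add: sum_distrib_left)
  also have "\<dots> = (1 / of_nat T) * (\<Sum>\<rho><T. of_real (Pr \<rho>) * (if \<rho> = m mod T then of_nat T else 0))"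
  proof (intro arg_cong[where f="\<lambda>z. (1 / of_nat T) * z"] sum.cong refl)
    fix \<rho> assume "\<rho> \<in> {..<T}"
    then have e: "(T dvd (m + (T - \<rho>))) = (\<rho> = m mod T)" using dvd_shift[of \<rho> T m] by auto
    show "of_real (Pr \<rho>) * (\<Sum>j<T. (omg T ^ (m + (T - \<rho>))) ^ j)
        = of_real (Pr \<rho>) * (if \<rho> = m mod T then of_nat T else 0)"
      unfolding geo[OF T] e by (rule refl)
  qed
  also have "\<dots> = complex_of_real (Pr (m mod T))"
    using T by (simp add: sum.delta' if_distrib[of "\<lambda>t. _ * t"] cong: if_cong)
  finally show ?thesis by simp
qed

context fg begin

lemma pointwise_RC:
  assumes x: "x \<in> gsimplex G" and gwa: "gw a"
  shows "RC (\<lambda>n. (pmap G a ^^ n) x g)"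
proof -
  interpret gw a by (rule gwa)
  obtain T Lp \<beta> where T: "T > 0" and \<beta>: "0 \<le> \<beta>" "\<beta> < 1"
    and bnd: "\<And>m g. \<bar>gpow G x m g - Lp (m mod T) g\<bar> \<le> 2 * \<beta> ^ (m div T)"
    using periodic_limit[OF x] by blast
  define X where "X m = gpow G x m g" for m
  define Pr where "Pr r = Lp r g" for r
  define W where "W m = X m - Pr (m mod T)" for m
  define q where "q n = qn a n" for n
  have q: "prob (q n)" for n unfolding q_def by (rule prob_qn[OF a_prob])
  have Xb: "\<bar>X m\<bar> \<le> 1" for m
    using gsimplex_bounds[OF gpow_gsimplex[OF x]] by (simp add: X_def abs_le_iff)
  have Wb: "\<bar>W m\<bar> \<le> 2 * \<beta> ^ (m div T)" for m using bnd[of m g] by (simp add: W_def X_def Pr_def)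
  have Wb2: "\<bar>W m\<bar> \<le> 2" for m
    using Wb[of m] power_le_one[OF \<beta>(1) less_imp_le[OF \<beta>(2)], of "m div T"] by simp
  have Pb: "\<bar>Pr (m mod T)\<bar> \<le> 3" for m using Xb[of m] Wb2[of m] by (simp add: W_def)
  have summ_b: "summable (\<lambda>m. q n m * h m)" if "\<And>m. \<bar>h m\<bar> \<le> B" for h B n
  proof (rule summable_comparison_test[OF _ summable_mult2[OF prob_summable[OF q[of n]], of B]])
    show "\<exists>N. \<forall>m\<ge>N. norm (q n m * h m) \<le> q n m * B"
      using that prob_nonneg[OF q[of n]] by (auto intro!: exI[of _ 0] mult_left_mono simp: abs_mult)
  qed
  define \<beta>' where "\<beta>' = max \<beta> (1/2)"
  have \<beta>': "0 < \<beta>'" "\<beta>' < 1" "\<beta> \<le> \<beta>'" using \<beta> by (auto simp: \<beta>'_def)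
  define \<gamma> where "\<gamma> = root T \<beta>'"
  have \<gamma>: "0 < \<gamma>" "\<gamma> < 1" "\<gamma> ^ T = \<beta>'" using T \<beta>' by (auto simp: \<gamma>_def real_root_gt_zero)
  have Wg: "\<bar>W m\<bar> \<le> (2 / \<beta>') * \<gamma> ^ m" for m
  proof -
    have "\<beta> ^ (m div T) \<le> \<beta>' ^ (m div T)" using \<beta> \<beta>' by (intro power_mono) auto
    moreover have "\<beta>' ^ (m div T) * \<beta>' \<le> \<gamma> ^ m"
    proof -
      have "\<beta>' ^ (m div T) * \<beta>' = \<gamma> ^ (T * (m div T + 1))"
        by (simp add: \<gamma>(3)[symmetric] power_mult[symmetric] mult.commute power_add)
      also have "\<dots> \<le> \<gamma> ^ m"
      proof (rule power_decreasing)
        have e: "T * (m div T) + m mod T = m" by (rule mult_div_mod_eq)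
        have lt: "m mod T < T" using T by simp
        have "T * (m div T + 1) = T * (m div T) + T" by simp
        then show "m \<le> T * (m div T + 1)" using e lt by linarith
      qed (use \<gamma> in auto)
      finally show ?thesis .
    qed
    ultimately have "\<beta>' * \<beta> ^ (m div T) \<le> \<gamma> ^ m"
      using \<beta>' by (smt (verit, best) mult.commute mult_left_mono)
    then have "\<beta> ^ (m div T) \<le> \<gamma> ^ m / \<beta>'" using \<beta>' by (simp add: field_simps)
    then show ?thesis using Wb[of m] by (simp add: field_simps)
  qed
  have y: "(pmap G a ^^ n) x g = (\<Sum>m. q n m * X m)" for n
    using iter_series[OF x a_prob, of n] by (simp add: q_def X_def)
  define Pp where "Pp n = (\<Sum>m. q n m * Pr (m mod T))" for n
  define Wp where "Wp n = (\<Sum>m. q n m * W m)" for n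
  have ysplit: "(pmap G a ^^ n) x g = Pp n + Wp n" for n
  proof -
    have "(\<Sum>m. q n m * X m) = (\<Sum>m. q n m * Pr (m mod T) + q n m * W m)"
      by (simp add: W_def algebra_simps)
    also have "\<dots> = Pp n + Wp n"
      unfolding Pp_def Wp_def
      by (rule suminf_add[symmetric, OF summ_b[of "\<lambda>m. Pr (m mod T)" 3, OF Pb] summ_b[of W 2, OF Wb2]])
    finally show ?thesis using y by simp
  qed
  have "Wp \<longlonglongrightarrow> qinf * W 0"
  proof -
    have sW: "summable (\<lambda>m. q n m * W m)" for n by (rule summ_b[of W 2, OF Wb2])
    have split: "Wp n = u n * W 0 + (\<Sum>m. q n (Suc m) * W (Suc m))" for n
      using suminf_split_head[OF sW[of n]] by (simp add: Wp_def u_qn q_def)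
    have sg: "summable (\<lambda>m. q n m * \<gamma> ^ m)" for n
      by (rule summ_b[of "\<lambda>m. \<gamma> ^ m" 1]) (use \<gamma> in \<open>simp add: power_le_one\<close>)
    have Fg: "(f ^^ n) \<gamma> = (\<Sum>m. q n m * \<gamma> ^ m)" for n
      using F_rep[OF a_prob, of \<gamma> n] \<gamma> by (simp add: q_def)
    have rest: "\<bar>\<Sum>m. q n (Suc m) * W (Suc m)\<bar> \<le> (2 / \<beta>') * ((f ^^ n) \<gamma> - u n)" for n
    proof -
      have s1: "summable (\<lambda>m. q n (Suc m) * W (Suc m))"
        using summable_ignore_initial_segment[OF sW[of n], of 1] by simp
      have s2: "summable (\<lambda>m. q n (Suc m) * ((2 / \<beta>') * \<gamma> ^ Suc m))"
        using summable_mult[OF summable_ignore_initial_segment[OF sg[of n], of 1], of "2 / \<beta>'"]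
        by (simp add: mult_ac)
      have wq: "\<bar>q n (Suc m) * W (Suc m)\<bar> \<le> q n (Suc m) * ((2 / \<beta>') * \<gamma> ^ Suc m)" for m
        using mult_left_mono[OF Wg[of "Suc m"] prob_nonneg[OF q[of n], of "Suc m"]] prob_nonneg[OF q[of n], of "Suc m"]
        by (simp add: abs_mult)
      have s3: "summable (\<lambda>m. \<bar>q n (Suc m) * W (Suc m)\<bar>)"
        by (rule summable_comparison_test[OF _ s2]) (use wq in auto)
      have "\<bar>\<Sum>m. q n (Suc m) * W (Suc m)\<bar> \<le> (\<Sum>m. \<bar>q n (Suc m) * W (Suc m)\<bar>)"
        by (rule summable_rabs[OF s3])
      also have "\<dots> \<le> (\<Sum>m. q n (Suc m) * ((2 / \<beta>') * \<gamma> ^ Suc m))"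
        by (rule suminf_le[OF wq s3 s2])
      also have "\<dots> = (2 / \<beta>') * (\<Sum>m. q n (Suc m) * \<gamma> ^ Suc m)"
        using suminf_mult[OF summable_ignore_initial_segment[OF sg[of n], of 1], of "2 / \<beta>'"]
        by (simp add: mult_ac)
      also have "(\<Sum>m. q n (Suc m) * \<gamma> ^ Suc m) = (f ^^ n) \<gamma> - u n"
        using suminf_split_head[OF sg[of n]] Fg[of n] by (simp add: u_qn q_def)
      finally show ?thesis .
    qed
    have "(\<lambda>n. (f ^^ n) \<gamma> - u n) \<longlonglongrightarrow> qinf - qinf"
      by (rule tendsto_diff[OF F_lim u_lim]) (use \<gamma> in auto)
    then have "(\<lambda>n. (2 / \<beta>') * ((f ^^ n) \<gamma> - u n)) \<longlonglongrightarrow> (2 / \<beta>') * (qinf - qinf)"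
      by (rule tendsto_mult[OF tendsto_const])
    then have g0: "(\<lambda>n. (2 / \<beta>') * ((f ^^ n) \<gamma> - u n)) \<longlonglongrightarrow> 0" by simp
    have ev: "\<forall>\<^sub>F n in sequentially. norm (\<Sum>m. q n (Suc m) * W (Suc m)) \<le> (2 / \<beta>') * ((f ^^ n) \<gamma> - u n)"
      using rest by (intro always_eventually allI) (simp only: real_norm_def)
    have "(\<lambda>n. \<Sum>m. q n (Suc m) * W (Suc m)) \<longlonglongrightarrow> 0"
      by (rule Lim_null_comparison[OF ev g0])
    moreover have "(\<lambda>n. u n * W 0) \<longlonglongrightarrow> qinf * W 0" by (rule tendsto_mult[OF u_lim tendsto_const])
    ultimately have "(\<lambda>n. u n * W 0 + (\<Sum>m. q n (Suc m) * W (Suc m))) \<longlonglongrightarrow> qinf * W 0 + 0"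
      by (rule tendsto_add[rotated])
    then have "(\<lambda>n. u n * W 0 + (\<Sum>m. q n (Suc m) * W (Suc m))) \<longlonglongrightarrow> qinf * W 0" by simp
    moreover have "Wp = (\<lambda>n. u n * W 0 + (\<Sum>m. q n (Suc m) * W (Suc m)))" using split by (rule ext)
    ultimately show ?thesis by simp
  qed
  then have RCW: "RC Wp" by (intro RC_conv) (auto simp: convergent_def)
  have Pp_eq: "Pp n = Re (\<Sum>j<T. dc T Pr j * (fc ^^ n) (omg T ^ j))" for n
  proof -
    have nw: "norm (omg T ^ j) = 1" for j by (simp add: omg_def norm_power)
    have sPr: "summable (\<lambda>m. q n m * Pr (m mod T))" by (rule summ_b[of "\<lambda>m. Pr (m mod T)" 3, OF Pb])
    have sj: "summable (\<lambda>m. dc T Pr j * (q n m *\<^sub>R (omg T ^ j) ^ m))" for j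
    proof -
      have "summable (\<lambda>m. q n m *\<^sub>R (omg T ^ j) ^ m)"
        by (rule summable_norm_cancel, rule summable_comparison_test[OF _ prob_summable[OF q[of n]]])
           (use nw prob_nonneg[OF q] in \<open>auto simp: norm_power\<close>)
      then show ?thesis by (rule summable_mult)
    qed
    have "complex_of_real (Pp n) = (\<Sum>m. complex_of_real (q n m * Pr (m mod T)))"
      unfolding Pp_def by (rule bounded_linear.suminf[OF bounded_linear_of_real sPr])
    also have "\<dots> = (\<Sum>m. \<Sum>j<T. dc T Pr j * (q n m *\<^sub>R (omg T ^ j) ^ m))"
    proof (intro suminf_cong)
      fix m
      have "complex_of_real (q n m * Pr (m mod T)) = of_real (q n m) * (\<Sum>j<T. dc T Pr j * (omg T ^ j) ^ m)"
        using dft[OF T, of Pr m] by simp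
      then show "complex_of_real (q n m * Pr (m mod T)) = (\<Sum>j<T. dc T Pr j * (q n m *\<^sub>R (omg T ^ j) ^ m))"
        by (simp add: sum_distrib_left scaleR_conv_of_real mult_ac)
    qed
    also have "\<dots> = (\<Sum>j<T. \<Sum>m. dc T Pr j * (q n m *\<^sub>R (omg T ^ j) ^ m))"
      by (rule suminf_sum) (rule sj)
    also have "\<dots> = (\<Sum>j<T. dc T Pr j * (fc ^^ n) (omg T ^ j))"
    proof (intro sum.cong refl)
      fix j
      have F: "(fc ^^ n) (omg T ^ j) = (\<Sum>m. q n m *\<^sub>R (omg T ^ j) ^ m)"
        using F_rep[OF a_prob, of "omg T ^ j" n] nw by (simp add: q_def)
      have s: "summable (\<lambda>m. q n m *\<^sub>R (omg T ^ j) ^ m)"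
        by (rule summable_norm_cancel, rule summable_comparison_test[OF _ prob_summable[OF q[of n]]])
           (use nw prob_nonneg[OF q] in \<open>auto simp: norm_power\<close>)
      have eq1: "(\<Sum>m. dc T Pr j * (q n m *\<^sub>R (omg T ^ j) ^ m)) = dc T Pr j * (\<Sum>m. q n m *\<^sub>R (omg T ^ j) ^ m)"
        by (rule suminf_mult[OF s])
      show "(\<Sum>m. dc T Pr j * (q n m *\<^sub>R (omg T ^ j) ^ m)) = dc T Pr j * (fc ^^ n) (omg T ^ j)"
        by (simp only: eq1 F)
    qed
    finally show ?thesis by (metis Re_complex_of_real)
  qed
  have "RC (\<lambda>n. Re (\<Sum>j<T. dc T Pr j * (fc ^^ n) (omg T ^ j)))"
  proof (intro RC_Re RC_sum RC_mult RC_const)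
    fix j
    have "(omg T ^ j) ^ T = 1" using omg_T[OF T] by (simp add: power_mult[symmetric] mult.commute power_mult)
    then show "RC (\<lambda>n. (fc ^^ n) (omg T ^ j))" by (rule root_RC[OF T])
  qed simp
  moreover have "Pp = (\<lambda>n. Re (\<Sum>j<T. dc T Pr j * (fc ^^ n) (omg T ^ j)))" using Pp_eq by (rule ext)
  ultimately have RCP: "RC Pp" by (simp only:)
  have "RC (\<lambda>n. Pp n + Wp n)" by (rule RC_add[OF RCP RCW])
  then show ?thesis by (simp add: ysplit)
qed

end

lemma tendsto_fun_pointwise:
  fixes f :: "nat \<Rightarrow> 'a \<Rightarrow> real"
  assumes "\<And>g. ((\<lambda>n. f n g) \<longlongrightarrow> l g) F"
  shows "(f \<longlongrightarrow> l) F"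
proof -
  have "limitin (product_topology (\<lambda>i. euclidean) UNIV) f l F"
    using assms by (simp add: limitin_componentwise)
  then show ?thesis by (simp add: euclidean_product_topology)
qed

theorem theorem5:
  fixes G :: "('a, 'b) monoid_scheme" and a :: "nat \<Rightarrow> real" and x :: "'a \<Rightarrow> real"
  assumes "group G" and "finite (carrier G)"
    and "\<And>k. 0 \<le> a k \<and> a k < 1"
    and "a sums 1"
    and "x \<in> gsimplex G"
  shows "\<exists>L. (\<lambda>n. (\<lambda>g. (1 / real n) * (\<Sum>i=1..n. ((pmap G a) ^^ i) x g))) \<longlonglongrightarrow> L"
proof -
  interpret fg G using assms(1,2) by (simp add: fg_def fg_axioms_def)
  have gwa: "gw a" using assms(3,4) by (simp add: gw_def prob_def)
  have "convergent (\<lambda>n. (1 / real n) * (\<Sum>i=1..n. ((pmap G a) ^^ i) x g))" for g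
    by (rule RC_cesaro[OF pointwise_RC[OF assms(5) gwa]])
  then have "\<forall>g. \<exists>l. (\<lambda>n. (1 / real n) * (\<Sum>i=1..n. ((pmap G a) ^^ i) x g)) \<longlonglongrightarrow> l"
    by (simp add: convergent_def)
  then obtain L where "\<And>g. (\<lambda>n. (1 / real n) * (\<Sum>i=1..n. ((pmap G a) ^^ i) x g)) \<longlonglongrightarrow> L g"
    by metis
  then show ?thesis by (intro exI[of _ L] tendsto_fun_pointwise) simp
qed

end
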